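(* Let $\mathbb{K}$ be a field, $R=\mathbb{K}\langle x,y\rangle/(xy-1)$, $f_k=y^{k-1}x^{k-1}-y^kx^k$ and $S_k=Rf_k$ for $k\ge1$, $I=\bigoplus_{k\ge1}S_k=\langle1-yx\rangle$, and $I_0=\{x^{k-1}f_k: k\ge1\}$. Any left ideal $H$ of $R$ can be written as a direct sum of left $R$-submodules $H=\mathbb{K}[y]L\oplus Rp(x)$, where: if $H$ is not semisimple, then $p(x)$ is the unique monic polynomial in $x$ of minimal degree among nonzero polynomials in $x$ belonging to $H$, and $L=H\cap\mathrm{Span}_{\mathbb{K}}(I_0)\cap(S_1\oplus\cdots\oplus S_{\deg(p)})$; if $H$ is semisimple, then $p(x)=0$, $L=H\cap\mathrm{Span}_{\mathbb{K}}(I_0)$ and $H=\mathbb{K}[y]L$.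
   Context: $\mathbb{K}[x]$ and $\mathbb{K}[y]$ denote the subalgebras of $R$ generated by $x$ and $y$ respectively; $\mathbb{K}[y]L$ is the set of $\mathbb{K}[y]$-linear combinations of elements of $L$. *)

theory Defs
  imports "HOL-Computational_Algebra.Polynomial"
begin

text \<open>R has the K-basis y^i x^j (i, j >= 0); an element of R is a finitely
  supported coefficient function on pairs (i,j), the pair (i,j) standing for
  the monomial y^i x^j.  Since x y = 1, one has x^b y^c = x^(b-c) if b >= c
  and y^(c-b) otherwise, whence
  (y^a x^b)(y^c x^d) = y^(a + (c-b)^+) x^(d + (b-c)^+).\<close>

type_synonym 'a jac = "nat \<times> nat \<Rightarrow> 'a"

definition jsupp :: "'a::zero jac \<Rightarrow> (nat \<times> nat) set" where
  "jsupp f = {k. f k \<noteq> 0}"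

definition jac_carrier :: "'a::zero jac set" where
  "jac_carrier = {f. finite (jsupp f)}"

definition jzero :: "'a::zero jac" where
  "jzero = (\<lambda>_. 0)"

definition jadd :: "'a::field jac \<Rightarrow> 'a jac \<Rightarrow> 'a jac" where
  "jadd f g = (\<lambda>k. f k + g k)"

definition jneg :: "'a::field jac \<Rightarrow> 'a jac" where
  "jneg f = (\<lambda>k. - f k)"

definition jsub :: "'a::field jac \<Rightarrow> 'a jac \<Rightarrow> 'a jac" where
  "jsub f g = (\<lambda>k. f k - g k)"

definition jmul :: "'a::field jac \<Rightarrow> 'a jac \<Rightarrow> 'a jac" where
  "jmul f g = (\<lambda>(i, j). \<Sum>(a, b)\<in>jsupp f. \<Sum>(c, d)\<in>jsupp g.
      if (a + (c - b), d + (b - c)) = (i, j) then f (a, b) * g (c, d) else 0)"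

definition jmonom :: "nat \<Rightarrow> nat \<Rightarrow> 'a::field jac" where
  "jmonom i j = (\<lambda>k. if k = (i, j) then 1 else 0)"

definition jone :: "'a::field jac" where "jone = jmonom 0 0"
definition jx :: "'a::field jac" where "jx = jmonom 0 1"
definition jy :: "'a::field jac" where "jy = jmonom 1 0"

definition jpow :: "'a::field jac \<Rightarrow> nat \<Rightarrow> 'a jac" where
  "jpow r n = ((jmul r) ^^ n) jone"

definition eval_x :: "'a::field poly \<Rightarrow> 'a jac" where
  "eval_x p = (\<lambda>k. \<Sum>i\<le>degree p. coeff p i * jpow jx i k)"

definition eval_y :: "'a::field poly \<Rightarrow> 'a jac" where
  "eval_y p = (\<lambda>k. \<Sum>i\<le>degree p. coeff p i * jpow jy i k)"

definition Ky :: "'a::field jac set" where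
  "Ky = range eval_y"

definition lsub :: "'a::field jac set \<Rightarrow> bool" where
  "lsub M \<longleftrightarrow> M \<subseteq> jac_carrier \<and> jzero \<in> M \<and>
     (\<forall>a\<in>M. \<forall>b\<in>M. jadd a b \<in> M) \<and> (\<forall>a\<in>M. jneg a \<in> M) \<and>
     (\<forall>r\<in>jac_carrier. \<forall>a\<in>M. jmul r a \<in> M)"

abbreviation left_ideal :: "'a::field jac set \<Rightarrow> bool" where
  "left_ideal H \<equiv> lsub H"

definition simple_sub :: "'a::field jac set \<Rightarrow> bool" where
  "simple_sub M \<longleftrightarrow> lsub M \<and> M \<noteq> {jzero} \<and>
     (\<forall>N. lsub N \<and> N \<subseteq> M \<longrightarrow> N = {jzero} \<or> N = M)"

definition semisimple_lmod :: "'a::field jac set \<Rightarrow> bool" where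
  "semisimple_lmod H \<longleftrightarrow> lsub H \<and>
     H = {(\<lambda>k. \<Sum>i<n. v i k) | (n::nat) v.
            \<forall>i<n. \<exists>M. simple_sub M \<and> M \<subseteq> H \<and> v i \<in> M}"

definition fk :: "nat \<Rightarrow> 'a::field jac" where
  "fk k = jsub (jmul (jpow jy (k - 1)) (jpow jx (k - 1))) (jmul (jpow jy k) (jpow jx k))"

definition Sk :: "nat \<Rightarrow> 'a::field jac set" where
  "Sk k = {jmul r (fk k) | r. r \<in> jac_carrier}"

definition Ssum :: "nat \<Rightarrow> 'a::field jac set" where
  "Ssum n = {(\<lambda>k. \<Sum>i\<in>{1..n}. v i k) | v. \<forall>i\<in>{1..n}. v i \<in> Sk i}"

definition I0 :: "'a::field jac set" where
  "I0 = {jmul (jpow jx (k - 1)) (fk k) | k. k \<ge> 1}"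

definition kspan :: "'a::field jac set \<Rightarrow> 'a jac set" where
  "kspan A = {(\<lambda>k. \<Sum>i<n. c i * v i k) | (n::nat) c v. \<forall>i<n. v i \<in> A}"

definition KyL :: "'a::field jac set \<Rightarrow> 'a jac set" where
  "KyL L = {(\<lambda>k. \<Sum>i<n. jmul (q i) (l i) k) | (n::nat) q l. \<forall>i<n. q i \<in> Ky \<and> l i \<in> L}"

definition Rprinc :: "'a::field jac \<Rightarrow> 'a jac set" where
  "Rprinc a = {jmul r a | r. r \<in> jac_carrier}"

definition direct_sum_decomp :: "'a::field jac set \<Rightarrow> 'a jac set \<Rightarrow> 'a jac set \<Rightarrow> bool" where
  "direct_sum_decomp H A B \<longleftrightarrow> lsub A \<and> lsub B \<and>
     H = {jadd a b | a b. a \<in> A \<and> b \<in> B} \<and> A \<inter> B = {jzero}"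

definition min_x_poly :: "'a::field jac set \<Rightarrow> 'a poly \<Rightarrow> bool" where
  "min_x_poly H p \<longleftrightarrow> lead_coeff p = 1 \<and> eval_x p \<in> H \<and>
     (\<forall>q. q \<noteq> 0 \<and> eval_x q \<in> H \<longrightarrow> degree p \<le> degree q)"

end

theory Submission
  imports Defs "HOL-Library.Poly_Mapping"
begin

datatype bic = B nat nat

instantiation bic :: monoid_add
begin
definition zero_bic :: bic where "zero_bic = B 0 0"
fun plus_bic :: "bic \<Rightarrow> bic \<Rightarrow> bic" where
  "plus_bic (B a b) (B c d) = B (a + (c - b)) (d + (b - c))"
instance
proof
  fix x y z :: bic
  show "x + y + z = x + (y + z)"
    by (cases x; cases y; cases z) (auto simp: algebra_simps)
  show "0 + x = x" by (cases x) (simp add: zero_bic_def)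
  show "x + 0 = x" by (cases x) (simp add: zero_bic_def)
qed
end

type_synonym 'a R = "bic \<Rightarrow>\<^sub>0 'a"

abbreviation sng :: "nat \<Rightarrow> nat \<Rightarrow> 'a::field \<Rightarrow> 'a R" where
  "sng i j c \<equiv> Poly_Mapping.single (B i j) c"

definition C :: "'a::field \<Rightarrow> 'a R" where "C c = Poly_Mapping.single 0 c"
definition X :: "'a::field R" where "X = sng 0 1 1"
definition Y :: "'a::field R" where "Y = sng 1 0 1"

lemma sng_mult: "sng a b c * sng a' b' c' = sng (a + (a' - b)) (b' + (b - a')) (c * c')"
  by (simp add: mult_single)

lemma B00: "B 0 0 = 0" by (simp add: zero_bic_def)

lemma XY: "X * Y = (1 :: 'a::field R)"
  by (simp add: X_def Y_def mult_single B00)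

lemma Y_pow: "(Y::'a::field R) ^ n = sng n 0 1"
  by (induction n) (auto simp: Y_def mult_single B00 power_Suc2)

lemma X_pow: "(X::'a::field R) ^ n = sng 0 n 1"
  by (induction n) (auto simp: X_def mult_single B00 power_Suc2)

lemma sng_YX: "sng i j c = C c * (Y ^ i * X ^ j :: 'a::field R)"
  by (simp add: Y_pow X_pow C_def mult_single B00)

lemma sum_singles: "r = (\<Sum>k\<in>Poly_Mapping.keys r. Poly_Mapping.single k (Poly_Mapping.lookup r k))"
proof (rule poly_mapping_eqI)
  fix k
  show "Poly_Mapping.lookup r k = Poly_Mapping.lookup (\<Sum>k\<in>Poly_Mapping.keys r. Poly_Mapping.single k (Poly_Mapping.lookup r k)) k"
    by (simp add: lookup_sum lookup_single when_def in_keys_iff)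
qed

lemma C_central: "C c * r = r * (C c :: 'a::field R)"
proof -
  have "C c * r = (\<Sum>k\<in>Poly_Mapping.keys r. C c * Poly_Mapping.single k (Poly_Mapping.lookup r k))"
    by (subst sum_singles) (simp add: sum_distrib_left)
  also have "\<dots> = (\<Sum>k\<in>Poly_Mapping.keys r. Poly_Mapping.single k (Poly_Mapping.lookup r k) * C c)"
    by (simp add: C_def mult_single mult.commute)
  also have "\<dots> = r * C c"
    by (subst (2) sum_singles) (simp add: sum_distrib_right)
  finally show ?thesis .
qed

lemma C_add: "C (a + b) = C a + (C b :: 'a::field R)" by (simp add: C_def single_add)
lemma C_mult: "C (a * b) = C a * (C b :: 'a::field R)" by (simp add: C_def mult_single)
lemma C_0[simp]: "C 0 = (0 :: 'a::field R)" by (simp add: C_def)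
lemma C_1[simp]: "C 1 = (1 :: 'a::field R)" by (simp add: C_def)
lemma C_uminus: "C (- a) = - (C a :: 'a::field R)" by (simp add: C_def single_uminus)

definition ev :: "'a::field R \<Rightarrow> 'a poly \<Rightarrow> 'a R" where
  "ev Z P = (\<Sum>j\<le>degree P. C (coeff P j) * Z ^ j)"
abbreviation evx :: "'a::field poly \<Rightarrow> 'a R" where "evx \<equiv> ev X"
abbreviation evy :: "'a::field poly \<Rightarrow> 'a R" where "evy \<equiv> ev Y"

lemma ev_bound:
  assumes "degree P < n"
  shows "ev Z P = (\<Sum>j<n. C (coeff P j) * Z ^ j)"
proof -
  have "(\<Sum>j<n. C (coeff P j) * Z ^ j) = (\<Sum>j\<in>{..degree P} \<union> {degree P<..<n}. C (coeff P j) * Z ^ j)"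
    using assms by (intro sum.cong) auto
  also have "\<dots> = (\<Sum>j\<le>degree P. C (coeff P j) * Z ^ j) + (\<Sum>j\<in>{degree P<..<n}. C (coeff P j) * Z ^ j)"
    by (rule sum.union_disjoint) auto
  also have "(\<Sum>j\<in>{degree P<..<n}. C (coeff P j) * Z ^ j) = 0"
    by (intro sum.neutral) (auto simp: coeff_eq_0)
  finally show ?thesis by (simp add: ev_def)
qed

lemma ev_add: "ev Z (P + Q) = ev Z P + ev Z Q"
proof -
  obtain n where n: "degree P < n" "degree Q < n" "degree (P + Q) < n"
    using degree_add_le_max[of P Q] by (intro that[of "Suc (degree P + degree Q)"]) auto
  then show ?thesis
    by (simp add: ev_bound[of _ n] C_add distrib_right sum.distrib)
qed

lemma ev_smult: "ev Z (smult c P) = C c * ev Z P"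
proof -
  obtain n where n: "degree P < n" "degree (smult c P) < n"
    using degree_smult_le[of c P] by (intro that[of "Suc (degree P)"]) auto
  then show ?thesis
    by (simp add: ev_bound[of _ n] C_mult sum_distrib_left mult.assoc)
qed

lemma ev_0[simp]: "ev Z 0 = 0" by (simp add: ev_def)

lemma Zp_C: "Z ^ j * C c = C c * (Z::'a::field R) ^ j" by (rule C_central[symmetric])
lemma Z_C: "Z * C c = C c * (Z::'a::field R)" by (rule C_central[symmetric])

lemma ev_pCons: "ev Z (pCons a P) = C a + Z * ev Z P"
proof -
  define n where "n = Suc (degree P)"
  have d: "degree (pCons a P) < Suc n" using degree_pCons_le[of a P] by (simp add: n_def)
  have "ev Z (pCons a P) = (\<Sum>j<Suc n. C (coeff (pCons a P) j) * Z ^ j)" by (rule ev_bound[OF d])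
  also have "\<dots> = C a + (\<Sum>j<n. C (coeff P j) * Z ^ Suc j)"
    by (subst sum.lessThan_Suc_shift) simp
  also have "(\<Sum>j<n. C (coeff P j) * Z ^ Suc j) = Z * (\<Sum>j<n. C (coeff P j) * Z ^ j)"
    unfolding sum_distrib_left
  proof (rule sum.cong)
    fix j
    show "C (coeff P j) * Z ^ Suc j = Z * (C (coeff P j) * Z ^ j)"
      by (simp only: mult.assoc[symmetric] Z_C) (simp add: mult.assoc)
  qed simp
  also have "(\<Sum>j<n. C (coeff P j) * Z ^ j) = ev Z P" by (rule ev_bound[symmetric]) (simp add: n_def)
  finally show ?thesis .
qed

lemma ev_const: "ev Z [:c:] = C c"
  by (simp add: ev_def)

lemma ev_mult: "ev Z (P * Q) = ev Z P * ev Z Q"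
proof (induction P)
  case 0 then show ?case by simp
next
  case (pCons a P)
  have "pCons a P * Q = smult a Q + pCons 0 (P * Q)" by simp
  then have "ev Z (pCons a P * Q) = C a * ev Z Q + Z * ev Z (P * Q)"
    by (simp add: ev_add ev_smult ev_pCons)
  also have "\<dots> = (C a + Z * ev Z P) * ev Z Q" using pCons(2) by (simp add: algebra_simps)
  finally show ?case by (simp add: ev_pCons)
qed

lemma ev_1[simp]: "ev Z 1 = 1" using ev_const[of Z 1] by (simp add: one_pCons)

lemma ev_monom: "ev Z (monom c j) = C c * Z ^ j"
proof -
  have "degree (monom c j) < Suc j" by (simp add: degree_monom_le less_Suc_eq_le)
  then have "ev Z (monom c j) = (\<Sum>i<Suc j. C (coeff (monom c j) i) * Z ^ i)" by (rule ev_bound)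
  also have "\<dots> = C c * Z ^ j" by (simp add: coeff_monom)
  finally show ?thesis .
qed

lemma ev_diff: "ev Z (P - Q) = ev Z P - ev Z Q"
  using ev_add[of Z "P - Q" Q] by simp

lemma ev_uminus: "ev Z (- P) = - ev Z P"
  using ev_add[of Z "- P" P] by (simp add: eq_neg_iff_add_eq_0)

lemma ev_comm: "ev Z P * ev Z Q = ev Z Q * ev Z P"
  by (metis ev_mult mult.commute)


lemma Yevx: "Y ^ i * evx P = (\<Sum>j\<le>degree P. sng i j (coeff P j))"
  unfolding ev_def sum_distrib_left
proof (rule sum.cong)
  fix j
  have "Y ^ i * (C (coeff P j) * X ^ j) = (Y ^ i * C (coeff P j)) * X ^ j" by (simp add: mult.assoc)
  also have "\<dots> = C (coeff P j) * (Y ^ i * X ^ j)" by (simp only: C_central[of _ "Y ^ i", symmetric] mult.assoc)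
  finally show "Y ^ i * (C (coeff P j) * X ^ j) = sng i j (coeff P j)" by (simp add: sng_YX)
qed simp

lemma lookup_Yevx: "Poly_Mapping.lookup (Y ^ i * evx P) (B a b) = (if a = i then coeff P b else 0)"
  by (auto simp: Yevx lookup_sum lookup_single when_def coeff_eq_0)

lemma lookup_rows: "Poly_Mapping.lookup (\<Sum>i<n. Y ^ i * evx (P i)) (B a b) = (if a < n then coeff (P a) b else 0)"
  by (simp add: lookup_sum lookup_Yevx)

lemma rows_unique:
  assumes "(\<Sum>i<n. Y ^ i * evx (P i)) = (\<Sum>i<n. Y ^ i * evx (Q i))" "i < n"
  shows "P i = Q i"
proof (rule poly_eqI)
  fix b
  have "Poly_Mapping.lookup (\<Sum>i<n. Y ^ i * evx (P i)) (B i b) = Poly_Mapping.lookup (\<Sum>i<n. Y ^ i * evx (Q i)) (B i b)"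
    using assms(1) by simp
  then show "coeff (P i) b = coeff (Q i) b" using assms(2) by (simp add: lookup_rows)
qed

lemma rows_zero:
  assumes "(\<Sum>i<n. Y ^ i * evx (P i)) = 0" "i < n"
  shows "P i = 0"
  using rows_unique[where n=n and P=P and Q="\<lambda>_. 0" and i=i] assms by simp

definition rowp :: "'a::field R \<Rightarrow> nat \<Rightarrow> 'a poly" where
  "rowp r i = Abs_poly (\<lambda>j. Poly_Mapping.lookup r (B i j))"

definition bfst :: "bic \<Rightarrow> nat" where "bfst k = (case k of B a b \<Rightarrow> a)"
definition bsnd :: "bic \<Rightarrow> nat" where "bsnd k = (case k of B a b \<Rightarrow> b)"

lemma coeff_rowp: "coeff (rowp r i) = (\<lambda>j. Poly_Mapping.lookup r (B i j))"
  unfolding rowp_def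
proof (rule coeff_Abs_poly)
  fix j assume j: "Max (bsnd ` Poly_Mapping.keys r) < j"
  show "Poly_Mapping.lookup r (B i j) = 0"
  proof (rule ccontr)
    assume "Poly_Mapping.lookup r (B i j) \<noteq> 0"
    then have "B i j \<in> Poly_Mapping.keys r" by (simp add: in_keys_iff)
    then have "j \<le> Max (bsnd ` Poly_Mapping.keys r)"
      by (intro Max_ge) (auto simp: bsnd_def intro!: image_eqI[where x="B i j"])
    with j show False by simp
  qed
qed

lemma row_decomp: "\<exists>N. \<forall>n\<ge>N. r = (\<Sum>i<n. Y ^ i * evx (rowp r i))"
proof -
  define N where "N = Suc (Max (bfst ` Poly_Mapping.keys r))"
  have z: "Poly_Mapping.lookup r (B a b) = 0" if "a \<ge> N" for a b
  proof (rule ccontr)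
    assume "Poly_Mapping.lookup r (B a b) \<noteq> 0"
    then have "B a b \<in> Poly_Mapping.keys r" by (simp add: in_keys_iff)
    then have "a \<le> Max (bfst ` Poly_Mapping.keys r)"
      by (intro Max_ge) (auto simp: bfst_def intro!: image_eqI[where x="B a b"])
    with that show False by (simp add: N_def)
  qed
  show ?thesis
  proof (intro exI allI impI)
    fix n assume n: "N \<le> n"
    show "r = (\<Sum>i<n. Y ^ i * evx (rowp r i))"
    proof (rule poly_mapping_eqI)
      fix k show "Poly_Mapping.lookup r k = Poly_Mapping.lookup (\<Sum>i<n. Y ^ i * evx (rowp r i)) k"
        using z n by (cases k) (auto simp: lookup_rows coeff_rowp)
    qed
  qed
qed

definition E :: "'a::field R" where "E = 1 - Y * X"

lemma E_Y: "E * Y = (0::'a::field R)"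
  by (simp add: E_def left_diff_distrib mult.assoc XY)
lemma X_E: "X * E = (0::'a::field R)"
  by (simp add: E_def right_diff_distrib mult.assoc[symmetric] XY)
lemma E_E: "E * E = (E::'a::field R)"
proof -
  have "E * E = E * 1 - E * Y * X" by (simp add: E_def right_diff_distrib mult.assoc)
  then show ?thesis by (simp add: E_Y)
qed

lemma XpYp: "X ^ a * Y ^ a = (1::'a::field R)"
proof (induction a)
  case (Suc a)
  have "X ^ Suc a * Y ^ Suc a = X * (X ^ a * Y ^ a) * (Y::'a R)"
    by (simp only: power_Suc[of X] power_Suc2[of Y] mult.assoc)
  then show ?case using Suc by (simp add: XY)
qed simp

lemma XpYp1: "X ^ (a + k) * Y ^ a = (X::'a::field R) ^ k"
  by (simp only: add.commute[of a k] power_add mult.assoc XpYp mult_1_right)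
lemma XpYp2: "X ^ a * Y ^ (a + k) = (Y::'a::field R) ^ k"
  by (simp only: power_add mult.assoc[symmetric] XpYp mult_1_left)

lemma E_Yp: "E * Y ^ Suc k = (0::'a::field R)"
  by (simp only: power_Suc mult.assoc[symmetric] E_Y mult_zero_left)
lemma Xp_E: "X ^ Suc k * E = (0::'a::field R)"
  by (simp only: power_Suc2 mult.assoc X_E mult_zero_right)

lemma XpYi: "i \<le> M \<Longrightarrow> X ^ M * Y ^ i = (X::'a::field R) ^ (M - i)"
  using XpYp1[of i "M - i"] by simp

lemma EXYE: "E * X ^ a * Y ^ b * E = (if a = b then E else (0::'a::field R))"
proof (cases "a \<le> b")
  case True
  then obtain k where b: "b = a + k" by (metis le_add_diff_inverse)
  have "E * X ^ a * Y ^ b * E = E * Y ^ k * E" by (simp add: b mult.assoc[symmetric] XpYp2)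
      (simp add: mult.assoc XpYp2)
  also have "\<dots> = (if a = b then E else 0)"
  proof (cases k)
    case 0 then show ?thesis by (simp add: b E_E)
  next
    case (Suc n) then show ?thesis using b by (simp only: E_Yp mult_zero_left) simp
  qed
  finally show ?thesis .
next
  case False
  then obtain k where a: "a = b + Suc k" by (metis add_Suc_right less_imp_Suc_add not_le)
  have "X ^ a * Y ^ b = X ^ Suc k" using XpYi[of b a] a by (simp del: power_Suc)
  have "E * X ^ a * Y ^ b * E = E * (X ^ a * Y ^ b) * E" by (simp only: mult.assoc)
  also have "\<dots> = E * (X ^ Suc k * E)" by (simp only: \<open>X ^ a * Y ^ b = X ^ Suc k\<close> mult.assoc)
  also have "\<dots> = 0" by (simp only: Xp_E mult_zero_right)
  finally show ?thesis using a by simp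
qed

lemma tele: "1 - Y ^ N * X ^ N = (\<Sum>a<N. Y ^ a * E * (X::'a::field R) ^ a)"
proof (induction N)
  case (Suc N)
  have "Y ^ N * E * X ^ N = Y ^ N * X ^ N - (Y ^ N * Y) * (X * X ^ N :: 'a R)"
    by (simp add: E_def left_diff_distrib right_diff_distrib mult.assoc)
  also have "(Y ^ N * Y) * (X * X ^ N) = Y ^ Suc N * (X ^ Suc N :: 'a R)"
    by (simp only: power_Suc[of X] power_Suc2[of Y])
  finally have "Y ^ N * E * X ^ N = Y ^ N * X ^ N - Y ^ Suc N * (X ^ Suc N :: 'a R)" .
  then have "(\<Sum>a<Suc N. Y ^ a * E * X ^ a) = (1 - Y ^ N * X ^ N) + (Y ^ N * X ^ N - Y ^ Suc N * (X ^ Suc N :: 'a R))"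
    by (simp only: sum.lessThan_Suc Suc.IH[symmetric])
  then show ?case by (simp del: power_Suc)
qed simp

definition Ifin :: "'a::field R \<Rightarrow> bool" where "Ifin h \<longleftrightarrow> (\<exists>N. X ^ N * h = 0)"

lemma Xp_zero_mono: "X ^ N * h = 0 \<Longrightarrow> N \<le> M \<Longrightarrow> X ^ M * (h::'a::field R) = 0"
proof -
  assume a: "X ^ N * h = 0" "N \<le> M"
  then obtain k where "M = k + N" by (metis le_add_diff_inverse2)
  then have "X ^ M * h = X ^ k * (X ^ N * h)" by (simp add: power_add mult.assoc)
  then show ?thesis using a by simp
qed

lemma Ifin_add: "Ifin a \<Longrightarrow> Ifin b \<Longrightarrow> Ifin (a + b)"
  unfolding Ifin_def
proof (elim exE)
  fix N M assume "X ^ N * a = 0" "X ^ M * b = 0"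
  then have "X ^ (N + M) * a = 0" "X ^ (N + M) * b = 0" using Xp_zero_mono[of N a "N + M"] Xp_zero_mono[of M b "N + M"] by auto
  then show "\<exists>N. X ^ N * (a + b) = 0" by (intro exI[of _ "N + M"]) (simp add: distrib_left)
qed

lemma Ifin_0: "Ifin 0" by (simp add: Ifin_def)

lemma Ifin_sum: "(\<And>i. i \<in> A \<Longrightarrow> Ifin (f i)) \<Longrightarrow> Ifin (sum f A)"
  by (induction A rule: infinite_finite_induct) (auto simp: Ifin_0 Ifin_add)

lemma Ifin_decomp:
  assumes "X ^ N * h = 0"
  shows "h = (\<Sum>a<N. Y ^ a * (E * X ^ a * (h::'a::field R)))"
proof -
  have "h = (1 - Y ^ N * X ^ N) * h + Y ^ N * (X ^ N * h)" by (simp add: algebra_simps)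
  also have "\<dots> = (\<Sum>a<N. Y ^ a * E * X ^ a) * h" by (simp add: assms tele)
  finally show ?thesis by (simp add: sum_distrib_right mult.assoc)
qed

lemma ev_sum: "ev Z (sum f A) = (\<Sum>i\<in>A. ev Z (f i))"
  by (induction A rule: infinite_finite_induct) (auto simp: ev_add)

lemma X_evx: "X * evx P = evx (monom 1 1 * P)"
  by (simp add: ev_mult ev_monom)

lemma Xp_poly: "\<exists>N. \<forall>M\<ge>N. \<exists>g. X ^ M * r = evx g"
proof -
  obtain N where N: "\<And>n. n \<ge> N \<Longrightarrow> r = (\<Sum>i<n. Y ^ i * evx (rowp r i))" using row_decomp by blast
  show ?thesis
  proof (intro exI[of _ N] allI impI)
    fix M assume M: "N \<le> M"
    have "X ^ M * r = (\<Sum>i<N. X ^ M * Y ^ i * evx (rowp r i))"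
      by (subst N[OF order.refl]) (simp add: sum_distrib_left mult.assoc)
    also have "\<dots> = (\<Sum>i<N. evx (monom 1 (M - i) * rowp r i))"
      using M by (intro sum.cong refl) (simp add: XpYi ev_mult ev_monom)
    also have "\<dots> = evx (\<Sum>i<N. monom 1 (M - i) * rowp r i)" by (simp add: ev_sum)
    finally show "\<exists>g. X ^ M * r = evx g" by blast
  qed
qed

lemma E_row: "E * r = E * evx (rowp r 0)"
proof -
  obtain N where N: "\<And>n. n \<ge> N \<Longrightarrow> r = (\<Sum>i<n. Y ^ i * evx (rowp r i))" using row_decomp by blast
  have "E * r = (\<Sum>i<Suc N. E * (Y ^ i * evx (rowp r i)))"
    by (subst N[of "Suc N"]) (simp_all add: sum_distrib_left del: sum.lessThan_Suc)
  also have "\<dots> = E * evx (rowp r 0)"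
    by (subst sum.lessThan_Suc_shift) (simp add: mult.assoc[symmetric] E_Y)
  finally show ?thesis .
qed

lemma evx_inj: "evx g = 0 \<Longrightarrow> g = 0"
  using rows_zero[where n=1 and P="\<lambda>_. g" and i=0] by simp

lemma E_evx_inj: assumes "E * evx g = 0" shows "g = 0"
proof -
  define P where "P = (\<lambda>i::nat. if i = 0 then g else - (monom 1 1 * g))"
  have "(\<Sum>i<2. Y ^ i * evx (P i)) = evx g - Y * (X * evx g)"
    by (simp add: P_def numeral_2_eq_2 X_evx ev_uminus)
  also have "\<dots> = E * evx g" by (simp add: E_def left_diff_distrib mult.assoc)
  finally have "(\<Sum>i<2. Y ^ i * evx (P i)) = 0" using assms by simp
  from rows_zero[OF this, of 0] show ?thesis by (simp add: P_def)
qed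

lemma evx_E: "evx P * E = C (coeff P 0) * E"
proof (cases P)
  case (pCons a P')
  have "evx P * E = C a * E + X * evx P' * E"
    by (simp add: pCons ev_pCons distrib_right)
  also have "X * evx P' = evx P' * X"
    using ev_comm[of X "monom 1 1" P'] by (simp add: ev_monom)
  finally have "evx P * E = C a * E + evx P' * (X * E)" by (simp add: mult.assoc)
  then show ?thesis by (simp add: pCons X_E)
qed

definition lid :: "'a::field R set \<Rightarrow> bool" where
  "lid A \<longleftrightarrow> 0 \<in> A \<and> (\<forall>a\<in>A. \<forall>b\<in>A. a + b \<in> A) \<and> (\<forall>a\<in>A. - a \<in> A) \<and> (\<forall>r. \<forall>a\<in>A. r * a \<in> A)"

lemma lid_0: "lid A \<Longrightarrow> 0 \<in> A" by (simp add: lid_def)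
lemma lid_add: "lid A \<Longrightarrow> a \<in> A \<Longrightarrow> b \<in> A \<Longrightarrow> a + b \<in> A" by (simp add: lid_def)
lemma lid_mult: "lid A \<Longrightarrow> a \<in> A \<Longrightarrow> r * a \<in> A" by (simp add: lid_def)
lemma lid_uminus: "lid A \<Longrightarrow> a \<in> A \<Longrightarrow> - a \<in> A" by (simp add: lid_def)
lemma lid_diff: "lid A \<Longrightarrow> a \<in> A \<Longrightarrow> b \<in> A \<Longrightarrow> a - b \<in> A"
  using lid_add[of A a "- b"] lid_uminus[of A b] by simp
lemma lid_sum: "lid A \<Longrightarrow> (\<And>i. i \<in> I \<Longrightarrow> f i \<in> A) \<Longrightarrow> sum f I \<in> A"
  by (induction I rule: infinite_finite_induct) (auto simp: lid_0 lid_add)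

definition RP :: "'a::field R \<Rightarrow> 'a R set" where "RP a = {r * a | r. True}"

lemma lid_RP: "lid (RP a)"
  unfolding lid_def RP_def
proof (intro conjI ballI allI)
  show "0 \<in> {r * a |r. True}" by (auto intro: exI[of _ 0])
next
  fix u v assume "u \<in> {r * a |r. True}" "v \<in> {r * a |r. True}"
  then obtain r s where "u = r * a" "v = s * a" by auto
  then show "u + v \<in> {r * a |r. True}" by (auto simp: distrib_right intro: exI[of _ "r + s"])
next
  fix u assume "u \<in> {r * a |r. True}"
  then obtain r where "u = r * a" by auto
  then show "- u \<in> {r * a |r. True}" by (auto intro: exI[of _ "- r"])
next
  fix t u assume "u \<in> {r * a |r. True}"
  then obtain r where "u = r * a" by auto
  then show "t * u \<in> {r * a |r. True}" by (auto simp: mult.assoc intro: exI[of _ "t * r"])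
qed

lemma RP_self: "a \<in> RP a" unfolding RP_def by (auto intro: exI[of _ 1])
lemma RP_sub: "lid A \<Longrightarrow> a \<in> A \<Longrightarrow> RP a \<subseteq> A" unfolding RP_def by (auto intro: lid_mult)

definition simpleR :: "'a::field R set \<Rightarrow> bool" where
  "simpleR M \<longleftrightarrow> lid M \<and> M \<noteq> {0} \<and> (\<forall>N. lid N \<and> N \<subseteq> M \<longrightarrow> N = {0} \<or> N = M)"

definition ssR :: "'a::field R set \<Rightarrow> bool" where
  "ssR H \<longleftrightarrow> lid H \<and> H = {(\<Sum>i<n. v i) | (n::nat) v. \<forall>i<n. \<exists>M. simpleR M \<and> M \<subseteq> H \<and> v i \<in> M}"

lemma evx_ne0: "g \<noteq> 0 \<Longrightarrow> evx g \<noteq> 0" using evx_inj by blast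

lemma simple_Ifin:
  assumes "simpleR M" "h \<in> M" shows "Ifin h"
proof (rule ccontr)
  assume nI: "\<not> Ifin h"
  have lM: "lid M" using assms(1) by (simp add: simpleR_def)
  obtain M0 where "\<forall>M\<ge>M0. \<exists>g. X ^ M * h = evx g" using Xp_poly by blast
  then obtain g where g: "X ^ M0 * h = evx g" by blast
  have g0: "g \<noteq> 0" using nI g by (auto simp: Ifin_def)
  have qM: "evx g \<in> M" using g lid_mult[OF lM assms(2)] by metis
  have xg: "X * evx g = evx (monom 1 1 * g)" by (rule X_evx)
  have sub: "RP (X * evx g) \<subseteq> M" by (rule RP_sub[OF lM lid_mult[OF lM qM]])
  have "RP (X * evx g) \<noteq> {0}"
  proof
    assume "RP (X * evx g) = {0}"
    then have "X * evx g = 0" using RP_self[of "X * evx g"] by blast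
    then have "monom 1 1 * g = 0" using xg evx_inj by metis
    then show False using g0 by (simp add: monom_eq_0_iff)
  qed
  then have "RP (X * evx g) = M" using assms(1) sub lid_RP by (auto simp: simpleR_def)
  then have "evx g \<in> RP (X * evx g)" using qM by simp
  then obtain r where r: "evx g = r * (X * evx g)" by (auto simp: RP_def)
  obtain N where N: "\<And>n. n \<ge> N \<Longrightarrow> r = (\<Sum>i<n. Y ^ i * evx (rowp r i))" using row_decomp by blast
  define P where "P = (\<lambda>i. rowp r i * (monom 1 1 * g))"
  define Q where "Q = (\<lambda>i::nat. if i = 0 then g else 0)"
  have "(\<Sum>i<Suc N. Y ^ i * evx (P i)) = r * (X * evx g)"
    by (subst N[of "Suc N"]) (simp_all add: P_def sum_distrib_right ev_mult xg mult.assoc del: sum.lessThan_Suc)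
  also have "\<dots> = (\<Sum>i<Suc N. Y ^ i * evx (Q i))"
    using r[symmetric] by (subst sum.lessThan_Suc_shift) (simp add: Q_def)
  finally have "P 0 = Q 0" by (rule rows_unique) simp
  then have eq: "rowp r 0 * (monom 1 1 * g) = g" by (simp add: P_def Q_def)
  then have "rowp r 0 \<noteq> 0" using g0 by auto
  then have "degree (rowp r 0 * (monom 1 1 * g)) = degree (rowp r 0) + (1 + degree g)"
    using g0 by (simp add: degree_mult_eq degree_monom_eq monom_eq_0_iff)
  then have "degree g = degree (rowp r 0) + (1 + degree g)" by (simp only: eq)
  then show False by simp
qed


lemma rE_form: "\<exists>n c. r * E = (\<Sum>i<n. C (c i) * (Y ^ i * E))"
proof -
  obtain N where N: "\<And>n. n \<ge> N \<Longrightarrow> r = (\<Sum>i<n. Y ^ i * evx (rowp r i))" using row_decomp by blast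
  have "r * E = (\<Sum>i<N. Y ^ i * (evx (rowp r i) * E))"
    by (subst N[OF order.refl]) (simp add: sum_distrib_right mult.assoc)
  also have "\<dots> = (\<Sum>i<N. C (coeff (rowp r i) 0) * (Y ^ i * E))"
    by (intro sum.cong refl) (simp add: evx_E mult.assoc[symmetric] C_central[of _ "Y ^ _"])
  finally have "r * E = (\<Sum>i<N. C (coeff (rowp r i) 0) * (Y ^ i * E))" .
  then show ?thesis by (intro exI[of _ N] exI[of _ "\<lambda>i. coeff (rowp r i) 0"])
qed

lemma Xp_v: "X * v = 0 \<Longrightarrow> X ^ Suc k * (v::'a::field R) = 0"
  by (simp only: power_Suc2 mult.assoc mult_zero_right)

lemma lift:
  fixes v :: "'a::field R"
  assumes lN: "lid N" and Xv: "X * v = 0"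
  shows "(\<Sum>i<n. C (c i) * (Y ^ i * v)) \<in> N \<Longrightarrow> (\<Sum>i<n. C (c i) * (Y ^ i * v)) \<noteq> 0 \<Longrightarrow> v \<in> N"
proof (induction n)
  case 0 then show ?case by simp
next
  case (Suc n)
  show ?case
  proof (cases "c n = 0")
    case True
    then show ?thesis using Suc by simp
  next
    case False
    have "X ^ n * (\<Sum>i<Suc n. C (c i) * (Y ^ i * v)) = (\<Sum>i<n. C (c i) * (X ^ n * Y ^ i * v)) + C (c n) * (X ^ n * Y ^ n * v)"
      by (simp add: distrib_left sum_distrib_left mult.assoc[symmetric] C_central[of _ "X ^ n"] del: power_Suc)
    also have "(\<Sum>i<n. C (c i) * (X ^ n * Y ^ i * v)) = 0"
    proof (intro sum.neutral ballI)
      fix i assume i: "i \<in> {..<n}"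
      then obtain k where nk: "n = i + Suc k" by (metis add_Suc_right less_imp_Suc_add lessThan_iff)
      have "X ^ n * Y ^ i * v = X ^ Suc k * v" by (simp only: nk XpYp1)
      then show "C (c i) * (X ^ n * Y ^ i * v) = 0" using Xp_v[OF Xv, of k] by simp
    qed
    finally have "X ^ n * (\<Sum>i<Suc n. C (c i) * (Y ^ i * v)) = C (c n) * v" by (simp add: XpYp)
    then have "C (c n) * v \<in> N" using lid_mult[OF lN Suc.prems(1)] by metis
    then have "C (inverse (c n)) * (C (c n) * v) \<in> N" by (rule lid_mult[OF lN])
    then show ?thesis using False by (simp add: mult.assoc[symmetric] C_mult[symmetric])
  qed
qed

lemma simple_RP:
  assumes "v = E * w" "v \<noteq> 0"
  shows "simpleR (RP v)"
  unfolding simpleR_def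
proof (intro conjI allI impI)
  show "lid (RP v)" by (rule lid_RP)
  show "RP v \<noteq> {0}" using RP_self[of v] assms(2) by blast
  fix N assume NN: "lid N \<and> N \<subseteq> RP v"
  have Xv: "X * v = 0" using assms(1) by (simp add: mult.assoc[symmetric] X_E)
  show "N = {0} \<or> N = RP v"
  proof (cases "N = {0}")
    case False
    then obtain u where u: "u \<in> N" "u \<noteq> 0" using NN lid_0 by blast
    then obtain r where "u = r * v" using NN by (auto simp: RP_def)
    obtain n c where rE: "r * E = (\<Sum>i<n. C (c i) * (Y ^ i * E))" using rE_form by blast
    have "u = (r * E) * w" using \<open>u = r * v\<close> assms(1) by (simp add: mult.assoc)
    also have "\<dots> = (\<Sum>i<n. C (c i) * (Y ^ i * v))" by (simp add: rE sum_distrib_right mult.assoc assms(1))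
    finally have "v \<in> N" using lift[where N=N and n=n and c=c, OF _ Xv] u NN by simp
    then have "RP v \<subseteq> N" using RP_sub NN by blast
    then show ?thesis using NN by blast
  qed simp
qed

lemma ss_Ifin: assumes "ssR H" "h \<in> H" shows "Ifin h"
proof -
  from assms obtain n :: nat and v where h: "h = (\<Sum>i<n. v i)" and v: "\<forall>i<n. \<exists>M. simpleR M \<and> M \<subseteq> H \<and> v i \<in> M"
    unfolding ssR_def by blast
  show ?thesis unfolding h by (rule Ifin_sum) (use v simple_Ifin in blast)
qed

lemma Ifin_ss: assumes lH: "lid H" and sub: "\<And>h. h \<in> H \<Longrightarrow> Ifin h" shows "ssR H"
  unfolding ssR_def
proof (intro conjI lH equalityI subsetI)
  fix h assume "h \<in> {(\<Sum>i<n. v i) | (n::nat) v. \<forall>i<n. \<exists>M. simpleR M \<and> M \<subseteq> H \<and> v i \<in> M}"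
  then obtain n :: nat and v where h: "h = (\<Sum>i<n. v i)" and v: "\<forall>i<n. \<exists>M. simpleR M \<and> M \<subseteq> H \<and> v i \<in> M" by blast
  show "h \<in> H" unfolding h by (rule lid_sum[OF lH]) (use v in blast)
next
  fix h assume hH: "h \<in> H"
  obtain N where N: "X ^ N * h = 0" using sub[OF hH] by (auto simp: Ifin_def)
  define u where "u = (\<lambda>a. E * (X ^ a * h))"
  have hd: "h = (\<Sum>a<N. Y ^ a * u a)" unfolding u_def using Ifin_decomp[OF N] by (simp add: mult.assoc)
  have uH: "u a \<in> H" for a unfolding u_def using hH lH by (simp add: lid_mult)
  have simp_u: "u a \<noteq> 0 \<Longrightarrow> simpleR (RP (u a))" for a by (rule simple_RP) (simp_all add: u_def)
  show "h \<in> {(\<Sum>i<n. v i) | (n::nat) v. \<forall>i<n. \<exists>M. simpleR M \<and> M \<subseteq> H \<and> v i \<in> M}"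
  proof (cases "\<exists>a<N. u a \<noteq> 0")
    case False
    then have "h = (\<Sum>i<(0::nat). u i)" using hd by simp
    then show ?thesis by blast
  next
    case True
    then obtain a0 where a0: "u a0 \<noteq> 0" by blast
    have "\<forall>a<N. \<exists>M. simpleR M \<and> M \<subseteq> H \<and> Y ^ a * u a \<in> M"
    proof (intro allI impI)
      fix a assume "a < N"
      show "\<exists>M. simpleR M \<and> M \<subseteq> H \<and> Y ^ a * u a \<in> M"
      proof (cases "u a = 0")
        case True
        then show ?thesis using simp_u[OF a0] RP_sub[OF lH uH[of a0]] lid_0[OF lid_RP[of "u a0"]] by auto
      next
        case False
        then show ?thesis using simp_u[OF False] RP_sub[OF lH uH[of a]] by (auto simp: RP_def)
      qed
    qed
    then show ?thesis using hd by blast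
  qed
qed

lemma ss_iff: "lid H \<Longrightarrow> ssR H \<longleftrightarrow> (\<forall>h\<in>H. Ifin h)"
  using ss_Ifin Ifin_ss by blast

definition fR :: "nat \<Rightarrow> 'a::field R" where "fR k = Y ^ (k - 1) * X ^ (k - 1) - Y ^ k * X ^ k"
definition SR :: "nat \<Rightarrow> 'a::field R set" where "SR k = {r * fR k | r. True}"
definition SsumR :: "nat \<Rightarrow> 'a::field R set" where
  "SsumR n = {(\<Sum>i\<in>{1..n}. v i) | v. \<forall>i\<in>{1..n}. v i \<in> SR i}"
definition I0R :: "'a::field R set" where "I0R = {X ^ (k - 1) * fR k | k. k \<ge> 1}"
definition kspanR :: "'a::field R set \<Rightarrow> 'a R set" where
  "kspanR A = {(\<Sum>i<n. C (c i) * v i) | (n::nat) c v. \<forall>i<n. v i \<in> A}"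
definition KyR :: "'a::field R set" where "KyR = range evy"
definition KyLR :: "'a::field R set \<Rightarrow> 'a R set" where
  "KyLR L = {(\<Sum>i<n. q i * l i) | (n::nat) q l. \<forall>i<n. q i \<in> KyR \<and> l i \<in> L}"
definition dsdR :: "'a::field R set \<Rightarrow> 'a R set \<Rightarrow> 'a R set \<Rightarrow> bool" where
  "dsdR H U V \<longleftrightarrow> lid U \<and> lid V \<and> H = {a + b | a b. a \<in> U \<and> b \<in> V} \<and> U \<inter> V = {0}"
definition minpR :: "'a::field R set \<Rightarrow> 'a poly \<Rightarrow> bool" where
  "minpR H p \<longleftrightarrow> lead_coeff p = 1 \<and> evx p \<in> H \<and> (\<forall>q. q \<noteq> 0 \<and> evx q \<in> H \<longrightarrow> degree p \<le> degree q)"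

lemma fR_Suc: "fR (Suc j) = Y ^ j * E * (X::'a::field R) ^ j"
proof -
  have "Y ^ j * E * X ^ j = Y ^ j * X ^ j - (Y ^ j * Y) * (X * (X::'a R) ^ j)"
    by (simp add: E_def left_diff_distrib right_diff_distrib mult.assoc)
  also have "(Y ^ j * Y) * (X * X ^ j) = Y ^ Suc j * (X::'a R) ^ Suc j"
    by (simp only: power_Suc[of X] power_Suc2[of Y])
  finally show ?thesis by (simp add: fR_def)
qed

lemma I0_elt: "X ^ j * fR (Suc j) = E * (X::'a::field R) ^ j"
proof -
  have "X ^ j * fR (Suc j) = (X ^ j * Y ^ j) * E * (X::'a R) ^ j" by (simp add: fR_Suc mult.assoc)
  then show ?thesis by (simp add: XpYp)
qed

lemma I0R_eq: "I0R = {E * X ^ j | j. True}"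
proof (intro equalityI subsetI)
  fix z assume "z \<in> (I0R :: 'a R set)"
  then obtain k where k: "z = X ^ (k - 1) * fR k" "k \<ge> 1" by (auto simp: I0R_def)
  then have "k = Suc (k - 1)" by simp
  then have "z = X ^ (k - 1) * fR (Suc (k - 1))" using k by simp
  then have "z = E * X ^ (k - 1)" by (simp add: I0_elt)
  then show "z \<in> {E * (X::'a R) ^ j | j. True}" by blast
next
  fix z assume "z \<in> {E * (X::'a R) ^ j | j. True}"
  then obtain j where "z = E * X ^ j" by blast
  then have "z = X ^ (Suc j - 1) * fR (Suc j)" by (simp add: I0_elt)
  then show "z \<in> I0R" unfolding I0R_def by (intro CollectI exI[of _ "Suc j"]) simp
qed

lemma E_evx_bound: "degree g < n \<Longrightarrow> E * evx g = (\<Sum>j<n. C (coeff g j) * (E * X ^ j))"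
  by (simp add: ev_bound sum_distrib_left mult.assoc[symmetric] C_central[of _ E])

lemma E_evx_sum: "E * evx (\<Sum>i<n. monom (c i) (j i)) = (\<Sum>i<n. C (c i) * (E * X ^ (j i)))"
  by (simp add: ev_sum ev_monom sum_distrib_left mult.assoc[symmetric] C_central[of _ E])

lemma kspan_I0: "kspanR I0R = {E * evx g | g. True}"
proof (intro equalityI subsetI)
  fix z assume "z \<in> kspanR I0R"
  then obtain n :: nat and c v where z: "z = (\<Sum>i<n. C (c i) * v i)" and v: "\<forall>i<n. v i \<in> I0R"
    by (auto simp: kspanR_def)
  have "\<forall>i<n. \<exists>j. v i = E * X ^ j" using v by (auto simp: I0R_eq)
  then obtain j where j: "\<forall>i<n. v i = E * X ^ j i" by metis
  have "z = E * evx (\<Sum>i<n. monom (c i) (j i))" by (simp add: E_evx_sum z j)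
  then show "z \<in> {E * evx g | g. True}" by blast
next
  fix z assume "z \<in> {E * evx g | g. True}"
  then obtain g where z: "z = E * evx g" by blast
  have "z = (\<Sum>j<Suc (degree g). C (coeff g j) * (E * X ^ j))"
    using E_evx_bound[of g "Suc (degree g)"] by (simp add: z del: sum.lessThan_Suc)
  moreover have "\<forall>j<Suc (degree g). E * X ^ j \<in> I0R" by (auto simp: I0R_eq)
  ultimately show "z \<in> kspanR I0R" unfolding kspanR_def
    by (intro CollectI exI[of _ "Suc (degree g)"] exI[of _ "coeff g"] exI[of _ "\<lambda>j. E * X ^ j"]) simp
qed

lemma fR_mult: "k \<noteq> c \<Longrightarrow> fR (Suc k) * fR (Suc c) = (0::'a::field R)"
proof -
  assume "k \<noteq> c"
  have "fR (Suc k) * fR (Suc c) = Y ^ k * (E * X ^ k * Y ^ c * E) * (X::'a R) ^ c"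
    by (simp add: fR_Suc mult.assoc)
  then show ?thesis using \<open>k \<noteq> c\<close> by (simp add: EXYE)
qed

lemma E_evx_f: "E * evx g * fR (Suc c) = C (coeff g c) * (E * (X::'a::field R) ^ c)"
proof -
  have d: "degree g < Suc (degree g + c)" by simp
  have "E * evx g * fR (Suc c) = (\<Sum>j<Suc (degree g + c). C (coeff g j) * ((E * X ^ j * Y ^ c * E) * X ^ c))"
    by (simp add: E_evx_bound[OF d] sum_distrib_right fR_Suc mult.assoc del: sum.lessThan_Suc)
  also have "\<dots> = (\<Sum>j<Suc (degree g + c). (if j = c then C (coeff g c) * (E * X ^ c) else 0))"
    by (intro sum.cong refl) (simp add: EXYE)
  also have "\<dots> = C (coeff g c) * (E * X ^ c)" by simp
  finally show ?thesis .
qed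

lemma E_monom_zero: "C a * (E * X ^ c) = (0::'a::field R) \<Longrightarrow> a = 0"
proof -
  assume "C a * (E * X ^ c) = (0::'a R)"
  then have "E * evx (monom a c) = 0" by (simp add: ev_monom mult.assoc[symmetric] C_central[of _ E])
  then have "monom a c = 0" by (rule E_evx_inj)
  then show "a = 0" by simp
qed

lemma Ssum_char: "E * evx g \<in> SsumR d \<longleftrightarrow> (\<forall>j\<ge>d. coeff g j = 0)"
proof
  assume "E * evx g \<in> SsumR d"
  then obtain v where eq: "E * evx g = (\<Sum>i\<in>{1..d}. v i)" and v: "\<forall>i\<in>{1..d}. v i \<in> SR i"
    by (auto simp: SsumR_def)
  have "\<forall>i\<in>{1..d}. \<exists>r. v i = r * fR i" using v by (auto simp: SR_def)
  then obtain r where r: "\<forall>i\<in>{1..d}. v i = r i * fR i" by metis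
  show "\<forall>j\<ge>d. coeff g j = 0"
  proof (intro allI impI)
    fix j assume j: "d \<le> j"
    have "E * evx g * fR (Suc j) = (\<Sum>i\<in>{1..d}. r i * (fR i * fR (Suc j)))"
      by (simp add: eq r sum_distrib_right mult.assoc)
    also have "\<dots> = 0"
    proof (intro sum.neutral ballI)
      fix i assume i: "i \<in> {1..d}"
      then obtain k where k: "i = Suc k" "k \<noteq> j" using j by (cases i) auto
      show "r i * (fR i * fR (Suc j)) = 0" using k by (simp add: fR_mult)
    qed
    finally have "C (coeff g j) * (E * X ^ j) = (0::'a R)" by (simp add: E_evx_f)
    then show "coeff g j = 0" by (rule E_monom_zero)
  qed
next
  assume z: "\<forall>j\<ge>d. coeff g j = 0"
  define v where "v = (\<lambda>i. (C (coeff g (i - 1)) * (E * X ^ (i - 1))) * fR i)"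
  have "v i \<in> SR i" for i by (auto simp: v_def SR_def)
  moreover have "E * evx g = (\<Sum>i\<in>{1..d}. v i)"
  proof (cases "g = 0")
    case True
    then show ?thesis by (simp add: v_def)
  next
    case False
    have dg: "degree g < d"
    proof (rule ccontr)
      assume "\<not> degree g < d"
      then have "coeff g (degree g) = 0" using z by simp
      then show False using False by simp
    qed
    have ef: "E * X ^ k * fR (Suc k) = E * (X::'a R) ^ k" for k
      using E_evx_f[of "monom 1 k" k] by (simp add: ev_monom mult.assoc[symmetric] C_central[of _ E])
    have "(\<Sum>i\<in>{1..d}. v i) = (\<Sum>k<d. v (Suc k))"
      by (simp add: sum.atLeast1_atMost_eq[symmetric])
    also have "\<dots> = (\<Sum>k<d. C (coeff g k) * (E * X ^ k))"
      by (intro sum.cong refl) (simp add: v_def mult.assoc ef[simplified mult.assoc])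
    also have "\<dots> = E * evx g" by (rule E_evx_bound[OF dg, symmetric])
    finally show ?thesis by simp
  qed
  ultimately show "E * evx g \<in> SsumR d" unfolding SsumR_def by blast
qed

lemma C_comm_left: "a * (C c * b) = C c * (a * (b::'a::field R))"
  by (metis C_central mult.assoc)

lemma evyE: "evy Q * E = (\<Sum>k\<le>degree Q. C (coeff Q k) * (Y ^ k * E))"
  by (simp add: ev_def sum_distrib_right mult.assoc)

lemma EXq: "E * X ^ a * (evy Q * E) = C (coeff Q a) * E"
proof -
  have "E * X ^ a * (evy Q * E) = (\<Sum>k\<le>degree Q. C (coeff Q k) * (E * X ^ a * Y ^ k * E))"
    unfolding evyE sum_distrib_left
    by (intro sum.cong refl) (subst C_comm_left, simp only: mult.assoc)
  also have "\<dots> = (\<Sum>k\<le>degree Q. if k = a then C (coeff Q a) * E else 0)"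
    by (intro sum.cong refl) (auto simp: EXYE)
  also have "\<dots> = C (coeff Q a) * E" by (auto simp: coeff_eq_0)
  finally show ?thesis .
qed

lemma Ifin_qE: "Ifin (evy Q * E * w)"
proof -
  have "X ^ Suc (degree Q) * (evy Q * E) = (\<Sum>k\<le>degree Q. C (coeff Q k) * (X ^ Suc (degree Q) * Y ^ k * E))"
    by (simp add: evyE sum_distrib_left mult.assoc[symmetric] C_central[of _ "X ^ Suc (degree Q)"] del: power_Suc)
  also have "\<dots> = 0"
  proof (intro sum.neutral ballI)
    fix k assume "k \<in> {..degree Q}"
    then have "Suc (degree Q) = k + Suc (degree Q - k)" by simp
    then have "X ^ Suc (degree Q) * Y ^ k * E = X ^ Suc (degree Q - k) * (E :: 'a R)"
      by (metis XpYp1)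
    then show "C (coeff Q k) * (X ^ Suc (degree Q) * Y ^ k * E) = 0" by (simp only: Xp_E) simp
  qed
  finally have F: "X ^ Suc (degree Q) * (evy Q * E) = 0" .
  have "X ^ Suc (degree Q) * (evy Q * E * w) = (X ^ Suc (degree Q) * (evy Q * E)) * w"
    by (simp only: mult.assoc)
  then show ?thesis unfolding Ifin_def using F by (intro exI[of _ "Suc (degree Q)"]) simp
qed

lemma sum_split: "(\<Sum>i<(n1::nat) + n2. f i) = (\<Sum>i<n1. f i) + (\<Sum>i<n2. f (n1 + i))"
  by (induction n2) (simp_all add: add.assoc)

lemma KyL_0: "0 \<in> KyLR L"
  unfolding KyLR_def by (intro CollectI exI[of _ 0]) simp

lemma KyL_single: "q \<in> KyR \<Longrightarrow> l \<in> L \<Longrightarrow> q * l \<in> KyLR L"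
  unfolding KyLR_def by (intro CollectI exI[of _ 1] exI[of _ "\<lambda>_. q"] exI[of _ "\<lambda>_. l"]) simp

lemma KyL_add: assumes "a \<in> KyLR L" "b \<in> KyLR L" shows "a + b \<in> KyLR L"
proof -
  obtain n1 :: nat and q1 l1 where a: "a = (\<Sum>i<n1. q1 i * l1 i)" "\<forall>i<n1. q1 i \<in> KyR \<and> l1 i \<in> L"
    using assms(1) by (auto simp: KyLR_def)
  obtain n2 :: nat and q2 l2 where b: "b = (\<Sum>i<n2. q2 i * l2 i)" "\<forall>i<n2. q2 i \<in> KyR \<and> l2 i \<in> L"
    using assms(2) by (auto simp: KyLR_def)
  define q where "q = (\<lambda>i. if i < n1 then q1 i else q2 (i - n1))"
  define l where "l = (\<lambda>i. if i < n1 then l1 i else l2 (i - n1))"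
  have "a + b = (\<Sum>i<n1 + n2. q i * l i)"
    by (simp add: sum_split a b q_def l_def)
  moreover have "\<forall>i<n1 + n2. q i \<in> KyR \<and> l i \<in> L"
    using a(2) b(2) by (auto simp: q_def l_def)
  ultimately show ?thesis unfolding KyLR_def by blast
qed

lemma KyL_sum: "(\<And>i. i \<in> I \<Longrightarrow> f i \<in> KyLR L) \<Longrightarrow> sum f I \<in> KyLR L"
  by (induction I rule: infinite_finite_induct) (auto simp: KyL_0 KyL_add)

lemma Ky_mono: "C c * Y ^ k \<in> KyR"
  unfolding KyR_def using ev_monom[of Y c k] by (metis rangeI)

lemma Ky_uminus: "q \<in> KyR \<Longrightarrow> - q \<in> KyR"
  unfolding KyR_def by (auto simp: ev_uminus[symmetric])

lemma KyL_uminus: assumes "a \<in> KyLR L" shows "- a \<in> KyLR L"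
proof -
  obtain n :: nat and q l where a: "a = (\<Sum>i<n. q i * l i)" "\<forall>i<n. q i \<in> KyR \<and> l i \<in> L"
    using assms by (auto simp: KyLR_def)
  have h1: "- a = (\<Sum>i<n. (- q i) * l i)" by (simp add: a sum_negf)
  have h2: "\<forall>i<n. - q i \<in> KyR \<and> l i \<in> L" using a(2) Ky_uminus by blast
  show ?thesis unfolding KyLR_def using h1 h2
    by (intro CollectI exI[of _ n] exI[of _ "\<lambda>i. - q i"] exI[of _ l]) simp
qed

lemma KyL_mult:
  assumes L: "L \<subseteq> {E * evx g | g. True}" and a: "a \<in> KyLR L"
  shows "r * a \<in> KyLR L"
proof -
  obtain n :: nat and q l where a: "a = (\<Sum>i<n. q i * l i)" "\<forall>i<n. q i \<in> KyR \<and> l i \<in> L"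
    using a by (auto simp: KyLR_def)
  have "r * a = (\<Sum>i<n. (r * q i) * l i)" by (simp add: a sum_distrib_left mult.assoc)
  also have "\<dots> \<in> KyLR L"
  proof (rule KyL_sum)
    fix i assume i: "i \<in> {..<n}"
    then obtain g where lg: "l i = E * evx g" using a(2) L by auto
    obtain m c where rE: "(r * q i) * E = (\<Sum>k<m. C (c k) * (Y ^ k * E))" using rE_form by blast
    have "(r * q i) * l i = (\<Sum>k<m. (C (c k) * Y ^ k) * l i)"
      by (simp add: lg mult.assoc[symmetric] rE sum_distrib_right)
    also have "\<dots> \<in> KyLR L"
      using i a(2) by (intro KyL_sum KyL_single Ky_mono) auto
    finally show "(r * q i) * l i \<in> KyLR L" .
  qed
  finally show ?thesis .
qed

lemma lid_KyL: "L \<subseteq> {E * evx g | g. True} \<Longrightarrow> lid (KyLR L)"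
  unfolding lid_def using KyL_0 KyL_add KyL_uminus KyL_mult by blast

lemma KyL_sub: assumes "lid H" "L \<subseteq> H" shows "KyLR L \<subseteq> H"
proof
  fix a assume "a \<in> KyLR L"
  then obtain n :: nat and q l where a: "a = (\<Sum>i<n. q i * l i)" "\<forall>i<n. q i \<in> KyR \<and> l i \<in> L"
    by (auto simp: KyLR_def)
  show "a \<in> H" unfolding a(1) using a(2) assms by (intro lid_sum lid_mult) auto
qed

lemma nonss_poly:
  assumes "lid H" "\<not> ssR H"
  shows "\<exists>g. g \<noteq> 0 \<and> evx g \<in> H"
proof -
  obtain h where h: "h \<in> H" "\<not> Ifin h" using assms ss_iff by blast
  obtain M0 where "\<forall>M\<ge>M0. \<exists>g. X ^ M * h = evx g" using Xp_poly by blast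
  then obtain g where g: "X ^ M0 * h = evx g" by blast
  have "g \<noteq> 0" using h(2) g by (auto simp: Ifin_def)
  moreover have "evx g \<in> H" using g lid_mult[OF assms(1) h(1)] by metis
  ultimately show ?thesis by blast
qed

lemma minp_exists:
  assumes "lid H" "\<exists>g. g \<noteq> 0 \<and> evx g \<in> H"
  shows "\<exists>p. minpR H p"
proof -
  define d where "d = (LEAST n. \<exists>g. g \<noteq> 0 \<and> evx g \<in> H \<and> degree g = n)"
  obtain g0 where g0: "g0 \<noteq> 0" "evx g0 \<in> H" using assms(2) by blast
  have "\<exists>g. g \<noteq> 0 \<and> evx g \<in> H \<and> degree g = d"
    unfolding d_def by (rule LeastI[of _ "degree g0"]) (use g0 in blast)
  then obtain g where g: "g \<noteq> 0" "evx g \<in> H" "degree g = d" by blast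
  have mn: "d \<le> degree q" if "q \<noteq> 0" "evx q \<in> H" for q
    unfolding d_def by (rule Least_le) (use that in blast)
  define p where "p = smult (inverse (lead_coeff g)) g"
  have "lead_coeff p = 1" using g(1) by (simp add: p_def)
  moreover have "evx p \<in> H" using lid_mult[OF assms(1) g(2)] by (simp add: p_def ev_smult)
  moreover have "degree p = d"
  proof -
    have "inverse (lead_coeff g) \<noteq> 0" using g(1) by simp
    then show ?thesis using g by (simp add: p_def)
  qed
  ultimately show ?thesis unfolding minpR_def using mn by auto
qed

lemma minp_unique:
  assumes "lid H" "minpR H p1" "minpR H p2" shows "p1 = p2"
proof (rule ccontr)
  assume ne: "p1 \<noteq> p2"
  have p1: "lead_coeff p1 = 1" "evx p1 \<in> H" and m1: "\<And>q. q \<noteq> 0 \<Longrightarrow> evx q \<in> H \<Longrightarrow> degree p1 \<le> degree q"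
    using assms(2) by (auto simp: minpR_def)
  have p2: "lead_coeff p2 = 1" "evx p2 \<in> H" and m2: "\<And>q. q \<noteq> 0 \<Longrightarrow> evx q \<in> H \<Longrightarrow> degree p2 \<le> degree q"
    using assms(3) by (auto simp: minpR_def)
  have "p1 \<noteq> 0" "p2 \<noteq> 0" using p1 p2 by auto
  then have dd: "degree p1 = degree p2" using m1 m2 p1 p2 by (meson antisym)
  define q where "q = p1 - p2"
  have q0: "q \<noteq> 0" using ne by (simp add: q_def)
  have qH: "evx q \<in> H" using lid_diff[OF assms(1) p1(2) p2(2)] by (simp add: q_def ev_diff)
  have "degree q \<le> degree p1" unfolding q_def using degree_diff_le[of p1 "degree p1" p2] dd by simp
  moreover have "coeff q (degree p1) = 0" using p1 p2 dd by (simp add: q_def)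
  ultimately have "degree q < degree p1" using q0
    by (metis le_neq_implies_less leading_coeff_0_iff)
  then show False using m1[OF q0 qH] by simp
qed

lemma minp_dvd:
  assumes "lid H" "minpR H p" "evx g \<in> H"
  shows "g = (g div p) * p"
proof -
  have p: "lead_coeff p = 1" "evx p \<in> H" and m: "\<And>q. q \<noteq> 0 \<Longrightarrow> evx q \<in> H \<Longrightarrow> degree p \<le> degree q"
    using assms(2) by (auto simp: minpR_def)
  have p0: "p \<noteq> 0" using p by auto
  have gd: "g = (g div p) * p + g mod p" by simp
  have e: "evx ((g div p) * p + g mod p) = evx (g div p) * evx p + evx (g mod p)"
    by (simp only: ev_add ev_mult)
  then have e2: "evx g = evx (g div p) * evx p + evx (g mod p)" by (simp only: div_mult_mod_eq)
  have "evx (g mod p) = evx g - evx (g div p) * evx p" by (simp add: e2)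
  also have "\<dots> \<in> H" using assms(1,3) p(2) by (intro lid_diff lid_mult)
  finally have mH: "evx (g mod p) \<in> H" .
  have "g mod p = 0"
  proof (rule ccontr)
    assume "g mod p \<noteq> 0"
    then have "degree (g mod p) < degree p" using degree_mod_less'[OF p0] by blast
    then show False using m[OF \<open>g mod p \<noteq> 0\<close> mH] by simp
  qed
  then show ?thesis using gd by simp
qed


lemma L_sub: "H \<inter> kspanR I0R \<inter> S \<subseteq> {E * evx g | g. True}"
  by (auto simp: kspan_I0)

lemma L_elt: assumes "l \<in> H \<inter> kspanR I0R \<inter> SsumR d" shows "\<exists>g. l = E * evx g \<and> (\<forall>j\<ge>d. coeff g j = 0)"
proof -
  have "l \<in> kspanR I0R" using assms by simp
  then obtain g where g: "l = E * evx g" by (auto simp: kspan_I0)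
  then have "E * evx g \<in> SsumR d" using assms by simp
  then show ?thesis using g Ssum_char by blast
qed

lemma L_intro: assumes "E * evx g \<in> H" "\<forall>j\<ge>d. coeff g j = 0" shows "E * evx g \<in> H \<inter> kspanR I0R \<inter> SsumR d"
proof -
  have "E * evx g \<in> kspanR I0R" by (auto simp: kspan_I0)
  moreover have "E * evx g \<in> SsumR d" using assms(2) Ssum_char by blast
  ultimately show ?thesis using assms(1) by blast
qed

lemma Y_Ky: "Y ^ a \<in> KyR"
  using Ky_mono[of 1 a] by simp

lemma h_split: "h = Y ^ N * (X ^ N * h) + (\<Sum>a<N. Y ^ a * (E * X ^ a * (h::'a::field R)))"
proof -
  have "h = (1 - Y ^ N * X ^ N) * h + Y ^ N * (X ^ N * (h::'a R))" by (simp add: algebra_simps)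
  also have "(1 - Y ^ N * X ^ N) * h = (\<Sum>a<N. Y ^ a * (E * X ^ a * h))"
    by (simp add: tele sum_distrib_right mult.assoc)
  finally show ?thesis by (simp add: add.commute)
qed

lemma decomp_sum:
  assumes lH: "lid H" and mp: "minpR H p" and hH: "h \<in> H"
  shows "\<exists>a b. h = a + b \<and> a \<in> KyLR (H \<inter> kspanR I0R \<inter> SsumR (degree p)) \<and> b \<in> RP (evx p)"
proof -
  have p: "lead_coeff p = 1" "evx p \<in> H" using mp by (auto simp: minpR_def)
  have p0: "p \<noteq> 0" using p by auto
  obtain N where "\<forall>M\<ge>N. \<exists>g. X ^ M * h = evx g" using Xp_poly by blast
  then obtain w where w: "X ^ N * h = evx w" by blast
  have "evx w \<in> H" using w lid_mult[OF lH hH] by metis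
  then have wu: "w = (w div p) * p" by (rule minp_dvd[OF lH mp])
  define wa where "wa = (\<lambda>a. rowp (X ^ a * h) 0)"
  define da where "da = (\<lambda>a. wa a div p)"
  define \<rho> where "\<rho> = (\<lambda>a. wa a mod p)"
  have "evx w = evx (w div p * p)" by (rule arg_cong[OF wu])
  with w have wp: "X ^ N * h = evx (w div p) * evx p" by (simp only: ev_mult)
  have per: "E * (X ^ a * h) = E * (evx (da a) * evx p) + E * evx (\<rho> a)" for a
  proof -
    have "E * X ^ a * h = E * evx (wa a)" unfolding wa_def by (simp add: mult.assoc E_row[symmetric])
    also have "wa a = da a * p + \<rho> a" by (simp add: da_def \<rho>_def)
    finally show ?thesis by (simp add: ev_add ev_mult distrib_left mult.assoc)
  qed
  have per': "E * X ^ a * h = E * evx (da a) * evx p + E * evx (\<rho> a)" for a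
    using per[of a] by (simp add: mult.assoc)
  have \<rho>H: "E * evx (\<rho> a) \<in> H" for a
  proof -
    have "E * evx (\<rho> a) = E * X ^ a * h - (E * evx (da a)) * evx p" using per'[of a] by simp
    also have "\<dots> \<in> H" using lH hH p(2) by (intro lid_diff lid_mult) (simp_all add: mult.assoc lid_mult)
    finally show ?thesis .
  qed
  have \<rho>c: "\<forall>j\<ge>degree p. coeff (\<rho> a) j = 0" for a
  proof (cases "\<rho> a = 0")
    case False
    then have "degree (\<rho> a) < degree p" using degree_mod_less'[OF p0] by (simp add: \<rho>_def)
    then show ?thesis by (auto intro: coeff_eq_0)
  qed simp
  define a where "a = (\<Sum>i<N. Y ^ i * (E * evx (\<rho> i)))"
  define b where "b = (Y ^ N * evx (w div p) + (\<Sum>i<N. Y ^ i * (E * evx (da i)))) * evx p"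
  have "h = Y ^ N * (X ^ N * h) + (\<Sum>i<N. Y ^ i * (E * X ^ i * h))" by (rule h_split)
  also have "\<dots> = a + b"
    by (simp add: a_def b_def mult.assoc per wp distrib_left distrib_right
        sum.distrib sum_distrib_right add_ac)
  finally have "h = a + b" .
  moreover have "a \<in> KyLR (H \<inter> kspanR I0R \<inter> SsumR (degree p))"
    unfolding a_def using \<rho>H \<rho>c by (intro KyL_sum KyL_single Y_Ky L_intro) auto
  moreover have "b \<in> RP (evx p)" unfolding b_def RP_def by blast
  ultimately show ?thesis by blast
qed

lemma decomp_int:
  assumes lH: "lid H" and mp: "minpR H p"
    and z1: "z \<in> KyLR (H \<inter> kspanR I0R \<inter> SsumR (degree p))" and z2: "z \<in> RP (evx p)"
  shows "z = 0"
proof -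
  have p: "lead_coeff p = 1" "evx p \<in> H" using mp by (auto simp: minpR_def)
  have p0: "p \<noteq> 0" using p by auto
  obtain n :: nat and q l where z: "z = (\<Sum>i<n. q i * l i)"
    and ql: "\<forall>i<n. q i \<in> KyR \<and> l i \<in> H \<inter> kspanR I0R \<inter> SsumR (degree p)"
    using z1 by (auto simp: KyLR_def)
  have "\<forall>i<n. \<exists>Q g. q i = evy Q \<and> l i = E * evx g \<and> (\<forall>j\<ge>degree p. coeff g j = 0)"
    using ql L_elt unfolding KyR_def by blast
  then obtain Q g where Qg: "\<And>i. i < n \<Longrightarrow> q i = evy (Q i) \<and> l i = E * evx (g i) \<and> (\<forall>j\<ge>degree p. coeff (g i) j = 0)"
    by metis
  obtain r where r: "z = r * evx p" using z2 by (auto simp: RP_def)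
  have zz: "z = (\<Sum>i<n. evy (Q i) * E * evx (g i))" unfolding z using Qg by (auto simp: mult.assoc)
  have EX0: "E * X ^ a * z = 0" for a
  proof -
    define G where "G = (\<Sum>i<n. smult (coeff (Q i) a) (g i))"
    have "E * X ^ a * z = (\<Sum>i<n. (E * X ^ a * (evy (Q i) * E)) * evx (g i))"
      by (simp add: zz sum_distrib_left mult.assoc)
    also have "\<dots> = (\<Sum>i<n. C (coeff (Q i) a) * E * evx (g i))" by (simp only: EXq)
    also have "\<dots> = (\<Sum>i<n. E * (C (coeff (Q i) a) * evx (g i)))"
      by (intro sum.cong refl) (simp only: C_central[of _ E] mult.assoc)
    also have "\<dots> = E * evx G"
      by (simp add: G_def ev_sum ev_smult sum_distrib_left)
    finally have e1: "E * X ^ a * z = E * evx G" .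
    define W where "W = rowp (X ^ a * r) 0"
    have "E * X ^ a * z = E * evx (W * p)"
      by (simp add: r W_def ev_mult mult.assoc[symmetric]) (simp add: mult.assoc E_row[symmetric])
    with e1 have "E * evx (G - W * p) = 0" by (simp add: ev_diff right_diff_distrib)
    then have GW: "G = W * p" using E_evx_inj by fastforce
    have Gc: "coeff G j = 0" if "j \<ge> degree p" for j
      using Qg that by (simp add: G_def coeff_sum)
    have "W = 0"
    proof (rule ccontr)
      assume "W \<noteq> 0"
      then have "degree (W * p) = degree W + degree p" using p0 by (simp add: degree_mult_eq)
      moreover have "coeff (W * p) (degree (W * p)) \<noteq> 0" using \<open>W \<noteq> 0\<close> p0 by simp
      ultimately show False using Gc[of "degree (W * p)"] GW by simp
    qed
    then show ?thesis using e1 GW by simp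
  qed
  have "Ifin z" unfolding zz by (intro Ifin_sum) (rule Ifin_qE)
  then obtain N where N: "X ^ N * z = 0" by (auto simp: Ifin_def)
  have "z = (\<Sum>a<N. Y ^ a * (E * X ^ a * z))" by (rule Ifin_decomp[OF N])
  also have "\<dots> = 0" by (simp add: EX0 mult.assoc[symmetric])
  finally show ?thesis .
qed

lemma RP_0: "RP (0::'a::field R) = {0}" by (auto simp: RP_def)

theorem mainR:
  fixes G :: "'a::field R set"
  assumes lG: "lid G"
  shows "(\<not> ssR G \<longrightarrow> (\<exists>!p. minpR G p) \<and>
            (\<forall>p. minpR G p \<longrightarrow> dsdR G (KyLR (G \<inter> kspanR I0R \<inter> SsumR (degree p))) (RP (evx p))))
       \<and> (ssR G \<longrightarrow> dsdR G (KyLR (G \<inter> kspanR I0R)) (RP (evx 0)) \<and> G = KyLR (G \<inter> kspanR I0R))"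
proof (intro conjI impI)
  assume nss: "\<not> ssR G"
  obtain p where "minpR G p" using minp_exists[OF lG nonss_poly[OF lG nss]] by blast
  then show "\<exists>!p. minpR G p" using minp_unique[OF lG] by blast
  show "\<forall>p. minpR G p \<longrightarrow> dsdR G (KyLR (G \<inter> kspanR I0R \<inter> SsumR (degree p))) (RP (evx p))"
  proof (intro allI impI)
    fix p assume mp: "minpR G p"
    let ?L = "G \<inter> kspanR I0R \<inter> SsumR (degree p)"
    have pG: "evx p \<in> G" using mp by (simp add: minpR_def)
    have l1: "lid (KyLR ?L)" by (rule lid_KyL[OF L_sub])
    have s1: "KyLR ?L \<subseteq> G" by (rule KyL_sub[OF lG]) blast
    have s2: "RP (evx p) \<subseteq> G" by (rule RP_sub[OF lG pG])
    show "dsdR G (KyLR ?L) (RP (evx p))"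
      unfolding dsdR_def
    proof (intro conjI l1 lid_RP equalityI subsetI)
      fix h assume "h \<in> G"
      then show "h \<in> {a + b |a b. a \<in> KyLR ?L \<and> b \<in> RP (evx p)}"
        using decomp_sum[OF lG mp] by blast
    next
      fix h assume "h \<in> {a + b |a b. a \<in> KyLR ?L \<and> b \<in> RP (evx p)}"
      then show "h \<in> G" using s1 s2 lid_add[OF lG] by blast
    next
      fix z assume "z \<in> KyLR ?L \<inter> RP (evx p)"
      then show "z \<in> {0}" using decomp_int[OF lG mp] by blast
    next
      fix z assume "z \<in> {0::'a R}"
      then show "z \<in> KyLR ?L \<inter> RP (evx p)" using KyL_0 lid_0[OF lid_RP] by blast
    qed
  qed
next
  assume ss: "ssR G"
  let ?L = "G \<inter> kspanR I0R"
  have Lsub: "?L \<subseteq> {E * evx g | g. True}" by (auto simp: kspan_I0)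
  have eq: "G = KyLR ?L"
  proof (intro equalityI subsetI)
    fix h assume hG: "h \<in> G"
    obtain N where N: "X ^ N * h = 0" using ss_Ifin[OF ss hG] by (auto simp: Ifin_def)
    have "h = (\<Sum>a<N. Y ^ a * (E * X ^ a * h))" by (rule Ifin_decomp[OF N])
    also have "\<dots> \<in> KyLR ?L"
    proof (intro KyL_sum KyL_single Y_Ky IntI)
      fix a
      show "E * X ^ a * h \<in> G" using hG lG by (simp add: mult.assoc lid_mult)
      have "E * X ^ a * h = E * evx (rowp (X ^ a * h) 0)" by (simp add: mult.assoc E_row[symmetric])
      then show "E * X ^ a * h \<in> kspanR I0R" by (auto simp: kspan_I0)
    qed
    finally show "h \<in> KyLR ?L" .
  next
    fix h assume "h \<in> KyLR ?L"
    then show "h \<in> G" using KyL_sub[OF lG, of ?L] by blast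
  qed
  show "G = KyLR ?L" by (rule eq)
  show "dsdR G (KyLR ?L) (RP (evx 0))"
    unfolding dsdR_def RP_0 ev_0
  proof (intro conjI lid_KyL[OF Lsub])
    show "lid {0::'a R}" using lid_RP[of 0] by (simp add: RP_0)
    show "G = {a + b |a b. a \<in> KyLR ?L \<and> b \<in> {0}}" using eq by auto
    show "KyLR ?L \<inter> {0} = {0}" using KyL_0 by blast
  qed
qed

definition phi :: "'a::field R \<Rightarrow> 'a jac" where
  "phi r = (\<lambda>(i, j). Poly_Mapping.lookup r (B i j))"
definition bp :: "bic \<Rightarrow> nat \<times> nat" where "bp k = (case k of B a b \<Rightarrow> (a, b))"

lemma bp_B[simp]: "bp (B a b) = (a, b)" by (simp add: bp_def)
lemma inj_bp: "inj bp"
proof (rule injI)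
  fix x y show "bp x = bp y \<Longrightarrow> x = y" by (cases x; cases y) auto
qed

lemma phi_B: "phi r (i, j) = Poly_Mapping.lookup r (B i j)" by (simp add: phi_def)

lemma jsupp_phi: "jsupp (phi r) = bp ` Poly_Mapping.keys r"
proof (intro equalityI subsetI)
  fix x assume "x \<in> jsupp (phi r)"
  then obtain i j where x: "x = (i, j)" "Poly_Mapping.lookup r (B i j) \<noteq> 0"
    by (cases x) (auto simp: jsupp_def phi_B)
  then show "x \<in> bp ` Poly_Mapping.keys r" by (auto simp: in_keys_iff intro!: image_eqI[where x="B i j"])
next
  fix x assume "x \<in> bp ` Poly_Mapping.keys r"
  then obtain k where k: "k \<in> Poly_Mapping.keys r" "x = bp k" by blast
  then show "x \<in> jsupp (phi r)" by (cases k) (auto simp: jsupp_def phi_B in_keys_iff)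
qed

lemma phi_carrier: "phi r \<in> jac_carrier"
  by (simp add: jac_carrier_def jsupp_phi)

lemma phi_inj: "phi r = phi s \<Longrightarrow> r = s"
proof (rule poly_mapping_eqI)
  fix k assume "phi r = phi s"
  then have "phi r (bp k) = phi s (bp k)" by simp
  then show "Poly_Mapping.lookup r k = Poly_Mapping.lookup s k" by (cases k) (simp add: phi_B)
qed

lemma inj_phi: "inj phi" using phi_inj by (rule injI)

lemma phi_eq_iff[simp]: "phi r = phi s \<longleftrightarrow> r = s" using phi_inj by blast

definition psi :: "'a::field jac \<Rightarrow> 'a R" where
  "psi f = Abs_poly_mapping (\<lambda>k. f (bp k))"

lemma phi_psi: assumes "f \<in> jac_carrier" shows "phi (psi f) = f"
proof -
  have "{k. f (bp k) \<noteq> 0} = bp -` jsupp f" by (auto simp: jsupp_def)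
  moreover have "finite (bp -` jsupp f)"
    using assms inj_bp by (simp add: jac_carrier_def finite_vimageI)
  ultimately have "Poly_Mapping.lookup (psi f) = (\<lambda>k. f (bp k))"
    by (simp add: psi_def)
  then show ?thesis by (auto simp: phi_def fun_eq_iff)
qed

lemma carrier_phi: "f \<in> jac_carrier \<Longrightarrow> \<exists>r. f = phi r"
  using phi_psi by metis

lemma carrier_image: assumes "A \<subseteq> jac_carrier" shows "A = phi ` {r. phi r \<in> A}"
proof (intro equalityI subsetI)
  fix x assume xA: "x \<in> A"
  then have "x \<in> jac_carrier" using assms by blast
  then have "phi (psi x) = x" by (rule phi_psi)
  then have "x = phi (psi x)" by simp
  then show "x \<in> phi ` {r. phi r \<in> A}" using xA by (intro image_eqI[of _ _ "psi x"]) auto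
next
  fix x assume "x \<in> phi ` {r. phi r \<in> A}" then show "x \<in> A" by auto
qed

lemma phi_in_image[simp]: "phi r \<in> phi ` A \<longleftrightarrow> r \<in> A"
  by (auto dest: injD[OF inj_phi])

lemma phi_image_eq[simp]: "phi ` A = phi ` U \<longleftrightarrow> A = U"
  by (rule inj_image_eq_iff[OF inj_phi])

lemma phi_image_sub[simp]: "phi ` A \<subseteq> phi ` U \<longleftrightarrow> A \<subseteq> U"
  by (rule inj_image_subset_iff[OF inj_phi])

lemma phi_image_Int: "phi ` A \<inter> phi ` U = phi ` (A \<inter> U)"
  by (rule image_Int[OF inj_phi, symmetric])

lemma phi_0: "phi 0 = jzero" by (auto simp: phi_def jzero_def fun_eq_iff)
lemma phi_add: "phi (a + b) = jadd (phi a) (phi b)"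
  by (simp add: phi_def jadd_def lookup_add fun_eq_iff)
lemma phi_uminus: "phi (- a) = jneg (phi a)"
  by (simp add: phi_def jneg_def fun_eq_iff lookup_uminus)
lemma phi_diff: "phi (a - b) = jsub (phi a) (phi b)"
  by (simp add: phi_def jsub_def fun_eq_iff lookup_minus)
lemma phi_sng: "phi (sng i j 1) = jmonom i j"
  by (auto simp: phi_def jmonom_def fun_eq_iff lookup_single when_def)
lemma phi_1: "phi 1 = jone"
  using phi_sng[of 0 0] by (simp add: jone_def B00)
lemma phi_X: "phi X = jx" by (simp add: X_def jx_def phi_sng)
lemma phi_Y: "phi Y = jy" by (simp add: Y_def jy_def phi_sng)
lemma phi_sum: "phi (sum f I) = (\<lambda>k. \<Sum>i\<in>I. phi (f i) k)"
  by (auto simp: phi_def fun_eq_iff lookup_sum)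

lemma lookup_C: "Poly_Mapping.lookup (C c * r) k = c * Poly_Mapping.lookup r k"
  unfolding C_def mult_map_scale_conv_mult[symmetric]
  by (simp add: map.rep_eq when_def)

lemma phi_C: "phi (C c * r) = (\<lambda>k. c * phi r k)"
  by (auto simp: phi_def fun_eq_iff lookup_C)

lemma lookup_times:
  fixes r s :: "'a::field R"
  shows "Poly_Mapping.lookup (r * s) k = (\<Sum>k1\<in>Poly_Mapping.keys r. \<Sum>k2\<in>Poly_Mapping.keys s.
      if k = k1 + k2 then Poly_Mapping.lookup r k1 * Poly_Mapping.lookup s k2 else 0)"
proof -
  have "Poly_Mapping.lookup (r * s) k = prod_fun (Poly_Mapping.lookup r) (Poly_Mapping.lookup s) k"
    by (simp add: times_poly_mapping.rep_eq)
  also have "\<dots> = (\<Sum>l. Poly_Mapping.lookup r l * (\<Sum>q. (Poly_Mapping.lookup s q when k = l + q)))"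
    by (simp add: prod_fun_def)
  also have "\<dots> = (\<Sum>l. Poly_Mapping.lookup r l * (\<Sum>q\<in>Poly_Mapping.keys s. (Poly_Mapping.lookup s q when k = l + q)))"
  proof -
    have "(\<Sum>q. (Poly_Mapping.lookup s q when k = l + q)) = (\<Sum>q\<in>Poly_Mapping.keys s. (Poly_Mapping.lookup s q when k = l + q))" for l
      by (rule Sum_any.expand_superset) (auto simp: in_keys_iff when_def)
    then show ?thesis by simp
  qed
  also have "\<dots> = (\<Sum>l\<in>Poly_Mapping.keys r. Poly_Mapping.lookup r l * (\<Sum>q\<in>Poly_Mapping.keys s. (Poly_Mapping.lookup s q when k = l + q)))"
    by (rule Sum_any.expand_superset) (auto simp: in_keys_iff)
  also have "\<dots> = (\<Sum>k1\<in>Poly_Mapping.keys r. \<Sum>k2\<in>Poly_Mapping.keys s.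
      if k = k1 + k2 then Poly_Mapping.lookup r k1 * Poly_Mapping.lookup s k2 else 0)"
    unfolding sum_distrib_left when_def by (intro sum.cong refl) simp
  finally show ?thesis .
qed

lemma plus_bp: "bp (k1 + k2) = (case bp k1 of (a, b) \<Rightarrow> case bp k2 of (c, d) \<Rightarrow> (a + (c - b), d + (b - c)))"
  by (cases k1; cases k2) simp

lemma phi_mult: "phi (r * s) = jmul (phi r) (phi s)"
proof (rule ext)
  fix x :: "nat \<times> nat"
  obtain i j where x: "x = (i, j)" by (cases x)
  have ri: "\<And>K (f :: nat \<times> nat \<Rightarrow> 'a). sum f (bp ` K) = sum (\<lambda>k. f (bp k)) K"
    using sum.reindex[OF inj_on_subset[OF inj_bp]] by (simp add: comp_def)
  have "jmul (phi r) (phi s) x = (\<Sum>u\<in>bp ` Poly_Mapping.keys r. \<Sum>v\<in>bp ` Poly_Mapping.keys s.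
      (case u of (a, b) \<Rightarrow> case v of (c, d) \<Rightarrow>
        if (a + (c - b), d + (b - c)) = (i, j) then phi r (a, b) * phi s (c, d) else 0))"
    by (simp add: jmul_def x jsupp_phi case_prod_beta)
  also have "\<dots> = (\<Sum>k1\<in>Poly_Mapping.keys r. \<Sum>k2\<in>Poly_Mapping.keys s.
      if B i j = k1 + k2 then Poly_Mapping.lookup r k1 * Poly_Mapping.lookup s k2 else 0)"
    unfolding ri
    apply (rule sum.cong, rule refl)
    apply (rule sum.cong, rule refl)
    subgoal for k1 k2 by (cases k1; cases k2) (auto simp: phi_B)
    done
  also have "\<dots> = phi (r * s) x" by (simp add: x phi_B lookup_times)
  finally show "phi (r * s) x = jmul (phi r) (phi s) x" by simp
qed

lemma ball_phi: "(\<forall>x\<in>phi ` A. P x) \<longleftrightarrow> (\<forall>a\<in>A. P (phi a))" by auto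
lemma ball_carrier: "(\<forall>x\<in>jac_carrier. P x) \<longleftrightarrow> (\<forall>a. P (phi (a::'a::field R)))"
  using carrier_phi phi_carrier by metis

lemma psi_phi: "psi (phi r) = r"
  using phi_psi[OF phi_carrier[of r]] by simp

lemma img_psi: "x \<in> phi ` A \<Longrightarrow> psi x \<in> A \<and> x = phi (psi x)"
  by (auto simp: psi_phi)

lemma phi_psi_img: "x \<in> phi ` A \<Longrightarrow> phi (psi x) = x"
  by (auto simp: psi_phi)

lemma phi_pow: "jpow (phi r) n = phi (r ^ n)"
proof (induction n)
  case 0 then show ?case by (simp add: jpow_def phi_1)
next
  case (Suc n)
  have "jpow (phi r) (Suc n) = jmul (phi r) (jpow (phi r) n)" by (simp add: jpow_def)
  then show ?case using Suc by (simp add: phi_mult)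
qed

lemma eval_x_phi: "eval_x p = phi (evx p)"
  by (auto simp: eval_x_def ev_def phi_sum phi_C phi_pow phi_X[symmetric] fun_eq_iff)
lemma eval_y_phi: "eval_y p = phi (evy p)"
  by (auto simp: eval_y_def ev_def phi_sum phi_C phi_pow phi_Y[symmetric] fun_eq_iff)

lemma fk_phi: "fk k = phi (fR k)"
  by (simp add: fk_def fR_def phi_diff phi_mult phi_pow phi_X[symmetric] phi_Y[symmetric])

lemma mult_image: "{jmul r (phi a) | r. r \<in> jac_carrier} = phi ` RP a"
proof (intro equalityI subsetI)
  fix z assume "z \<in> {jmul r (phi a) | r. r \<in> jac_carrier}"
  then obtain r where "z = jmul r (phi a)" "r \<in> jac_carrier" by blast
  then obtain r' where "z = phi (r' * a)" using carrier_phi phi_mult by metis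
  then show "z \<in> phi ` RP a" by (auto simp: RP_def)
next
  fix z assume "z \<in> phi ` RP a"
  then obtain r where "z = phi (r * a)" by (auto simp: RP_def)
  then show "z \<in> {jmul r (phi a) | r. r \<in> jac_carrier}" by (auto simp: phi_mult phi_carrier)
qed

lemma Rprinc_phi: "Rprinc (phi a) = phi ` RP a"
  by (simp add: Rprinc_def mult_image)

lemma Sk_phi: "Sk k = phi ` SR k"
  by (simp add: Sk_def fk_phi mult_image SR_def RP_def)

lemma Ky_phi: "Ky = phi ` KyR"
  by (auto simp: Ky_def KyR_def eval_y_phi)

lemma I0_phi: "I0 = phi ` I0R"
  by (auto simp: I0_def I0R_def fk_phi phi_pow phi_X[symmetric] phi_mult[symmetric])

lemma kspan_phi: "kspan (phi ` A) = phi ` kspanR A"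
proof (intro equalityI subsetI)
  fix z assume "z \<in> kspan (phi ` A)"
  then obtain n :: nat and c v where z: "z = (\<lambda>k. \<Sum>i<n. c i * v i k)" and v: "\<forall>i<n. v i \<in> phi ` A"
    by (auto simp: kspan_def)
  have vv: "\<And>i. i < n \<Longrightarrow> phi (psi (v i)) = v i" using v phi_psi_img by blast
  have "z = phi (\<Sum>i<n. C (c i) * psi (v i))"
    unfolding z phi_sum phi_C by (rule ext, rule sum.cong) (simp_all add: vv)
  moreover have "\<forall>i<n. psi (v i) \<in> A" using v img_psi by blast
  then have "(\<Sum>i<n. C (c i) * psi (v i)) \<in> kspanR A" unfolding kspanR_def
    by (intro CollectI exI[of _ n] exI[of _ c] exI[of _ "\<lambda>i. psi (v i)"]) simp
  ultimately show "z \<in> phi ` kspanR A" by simp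
next
  fix z assume "z \<in> phi ` kspanR A"
  then obtain n :: nat and c v where z: "z = phi (\<Sum>i<n. C (c i) * v i)" and v: "\<forall>i<n. v i \<in> A"
    by (auto simp: kspanR_def)
  have "z = (\<lambda>k. \<Sum>i<n. c i * phi (v i) k)" by (simp add: z phi_sum phi_C)
  moreover have "\<forall>i<n. phi (v i) \<in> phi ` A" using v by simp
  ultimately show "z \<in> kspan (phi ` A)" unfolding kspan_def
    by (intro CollectI exI[of _ n] exI[of _ c] exI[of _ "\<lambda>i. phi (v i)"]) simp
qed

lemma Ssum_phi: "Ssum n = phi ` SsumR n"
proof (intro equalityI subsetI)
  fix z assume "z \<in> Ssum n"
  then obtain v where z: "z = (\<lambda>k. \<Sum>i\<in>{1..n}. v i k)" and v: "\<forall>i\<in>{1..n}. v i \<in> Sk i"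
    by (auto simp: Ssum_def)
  have v': "\<forall>i\<in>{1..n}. v i \<in> phi ` SR i" using v by (simp add: Sk_phi)
  have vv: "\<And>i. i \<in> {1..n} \<Longrightarrow> phi (psi (v i)) = v i" using v' phi_psi_img by blast
  have "z = phi (\<Sum>i\<in>{1..n}. psi (v i))"
    unfolding z phi_sum by (rule ext, rule sum.cong) (simp_all add: vv)
  moreover have "\<forall>i\<in>{1..n}. psi (v i) \<in> SR i" using v' img_psi by blast
  then have "(\<Sum>i\<in>{1..n}. psi (v i)) \<in> SsumR n" unfolding SsumR_def
    by (intro CollectI exI[of _ "\<lambda>i. psi (v i)"]) simp
  ultimately show "z \<in> phi ` SsumR n" by simp
next
  fix z assume "z \<in> phi ` SsumR n"
  then obtain v where z: "z = phi (\<Sum>i\<in>{1..n}. v i)" and v: "\<forall>i\<in>{1..n}. v i \<in> SR i"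
    by (auto simp: SsumR_def)
  have "z = (\<lambda>k. \<Sum>i\<in>{1..n}. phi (v i) k)" by (simp add: z phi_sum)
  moreover have "\<forall>i\<in>{1..n}. phi (v i) \<in> Sk i" using v by (simp add: Sk_phi)
  ultimately show "z \<in> Ssum n" unfolding Ssum_def
    by (intro CollectI exI[of _ "\<lambda>i. phi (v i)"]) simp
qed

lemma KyL_phi: "KyL (phi ` L) = phi ` KyLR L"
proof (intro equalityI subsetI)
  fix z assume "z \<in> KyL (phi ` L)"
  then obtain n :: nat and q l where z: "z = (\<lambda>k. \<Sum>i<n. jmul (q i) (l i) k)"
    and ql: "\<forall>i<n. q i \<in> Ky \<and> l i \<in> phi ` L"
    by (auto simp: KyL_def)
  have ql': "\<forall>i<n. q i \<in> phi ` KyR \<and> l i \<in> phi ` L" using ql by (simp add: Ky_phi)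
  have vq: "\<And>i. i < n \<Longrightarrow> phi (psi (q i)) = q i" using ql' phi_psi_img by blast
  have vl: "\<And>i. i < n \<Longrightarrow> phi (psi (l i)) = l i" using ql' phi_psi_img by blast
  have "z = phi (\<Sum>i<n. psi (q i) * psi (l i))"
    unfolding z phi_sum phi_mult by (rule ext, rule sum.cong) (simp_all add: vq vl)
  moreover have "\<forall>i<n. psi (q i) \<in> KyR \<and> psi (l i) \<in> L" using ql' img_psi by blast
  then have "(\<Sum>i<n. psi (q i) * psi (l i)) \<in> KyLR L" unfolding KyLR_def
    by (intro CollectI exI[of _ n] exI[of _ "\<lambda>i. psi (q i)"] exI[of _ "\<lambda>i. psi (l i)"]) simp
  ultimately show "z \<in> phi ` KyLR L" by simp
next
  fix z assume "z \<in> phi ` KyLR L"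
  then obtain n :: nat and q l where z: "z = phi (\<Sum>i<n. q i * l i)" and ql: "\<forall>i<n. q i \<in> KyR \<and> l i \<in> L"
    by (auto simp: KyLR_def)
  have "z = (\<lambda>k. \<Sum>i<n. jmul (phi (q i)) (phi (l i)) k)" by (simp add: z phi_sum phi_mult)
  moreover have "\<forall>i<n. phi (q i) \<in> Ky \<and> phi (l i) \<in> phi ` L" using ql by (simp add: Ky_phi)
  ultimately show "z \<in> KyL (phi ` L)" unfolding KyL_def
    by (intro CollectI exI[of _ n] exI[of _ "\<lambda>i. phi (q i)"] exI[of _ "\<lambda>i. phi (l i)"]) simp
qed

lemma lsub_phi: "lsub (phi ` A) \<longleftrightarrow> lid A"
proof -
  have "phi ` A \<subseteq> jac_carrier" using phi_carrier by blast
  then show ?thesis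
    unfolding lsub_def lid_def ball_phi ball_carrier
    by (simp add: phi_0[symmetric] phi_add[symmetric] phi_uminus[symmetric] phi_mult[symmetric])
qed

lemma lsub_carrier: "lsub M \<Longrightarrow> M = phi ` {r. phi r \<in> M}"
  by (rule carrier_image) (simp add: lsub_def)

lemma zero_phi: "{jzero} = phi ` {0}" by (simp add: phi_0)

lemma simple_phi: "simple_sub (phi ` A) \<longleftrightarrow> simpleR A"
proof -
  have "(\<forall>N. lsub N \<and> N \<subseteq> phi ` A \<longrightarrow> N = {jzero} \<or> N = phi ` A) \<longleftrightarrow>
        (\<forall>N. lid N \<and> N \<subseteq> A \<longrightarrow> N = {0} \<or> N = A)"
  proof
    assume h: "\<forall>N. lsub N \<and> N \<subseteq> phi ` A \<longrightarrow> N = {jzero} \<or> N = phi ` A"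
    show "\<forall>N. lid N \<and> N \<subseteq> A \<longrightarrow> N = {0} \<or> N = A"
    proof (intro allI impI)
      fix N assume "lid N \<and> N \<subseteq> A"
      then have "lsub (phi ` N) \<and> phi ` N \<subseteq> phi ` A" by (simp add: lsub_phi)
      from h[rule_format, OF this] have "phi ` N = {jzero} \<or> phi ` N = phi ` A" .
      then show "N = {0} \<or> N = A" by (simp only: zero_phi phi_image_eq)
    qed
  next
    assume h: "\<forall>N. lid N \<and> N \<subseteq> A \<longrightarrow> N = {0} \<or> N = A"
    show "\<forall>N. lsub N \<and> N \<subseteq> phi ` A \<longrightarrow> N = {jzero} \<or> N = phi ` A"
    proof (intro allI impI)
      fix N assume N: "lsub N \<and> N \<subseteq> phi ` A"
      define N' where "N' = {r. phi r \<in> N}"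
      have NN: "N = phi ` N'" unfolding N'_def using N lsub_carrier by blast
      have "lid N' \<and> N' \<subseteq> A" using N by (simp add: NN lsub_phi)
      then have "N' = {0} \<or> N' = A" using h by blast
      then show "N = {jzero} \<or> N = phi ` A" by (auto simp: NN zero_phi)
    qed
  qed
  moreover have "phi ` A \<noteq> {jzero} \<longleftrightarrow> A \<noteq> {0}" by (simp only: zero_phi phi_image_eq)
  ultimately show ?thesis unfolding simple_sub_def simpleR_def lsub_phi by (simp only:)
qed

lemma ss_phi: "semisimple_lmod (phi ` A) \<longleftrightarrow> ssR A"
proof -
  have "{(\<lambda>k. \<Sum>i<n. v i k) | (n::nat) v. \<forall>i<n. \<exists>M. simple_sub M \<and> M \<subseteq> phi ` A \<and> v i \<in> M}
      = phi ` {(\<Sum>i<n. v i) | (n::nat) v. \<forall>i<n. \<exists>M. simpleR M \<and> M \<subseteq> A \<and> v i \<in> M}"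
  proof (intro equalityI subsetI)
    fix z assume "z \<in> {(\<lambda>k. \<Sum>i<n. v i k) | (n::nat) v. \<forall>i<n. \<exists>M. simple_sub M \<and> M \<subseteq> phi ` A \<and> v i \<in> M}"
    then obtain n :: nat and v where z: "z = (\<lambda>k. \<Sum>i<n. v i k)"
      and v: "\<forall>i<n. \<exists>M. simple_sub M \<and> M \<subseteq> phi ` A \<and> v i \<in> M" by blast
    have v': "\<forall>i<n. \<exists>M'. simpleR M' \<and> M' \<subseteq> A \<and> v i \<in> phi ` M'"
    proof (intro allI impI)
      fix i assume "i < n"
      then obtain M where M: "simple_sub M" "M \<subseteq> phi ` A" "v i \<in> M" using v by blast
      define M' where "M' = {r. phi r \<in> M}"
      have MM: "M = phi ` M'" unfolding M'_def using M(1) lsub_carrier by (auto simp: simple_sub_def)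
      show "\<exists>M'. simpleR M' \<and> M' \<subseteq> A \<and> v i \<in> phi ` M'"
        using M by (intro exI[of _ M']) (simp add: MM simple_phi)
    qed
    have vv: "\<And>i. i < n \<Longrightarrow> phi (psi (v i)) = v i"
    proof -
      fix i assume "i < n"
      then obtain M where "simple_sub M" "M \<subseteq> phi ` A" "v i \<in> M" using v by blast
      then have "v i \<in> phi ` A" by blast
      then show "phi (psi (v i)) = v i" by (rule phi_psi_img)
    qed
    have zeq: "z = phi (\<Sum>i<n. psi (v i))"
      unfolding z phi_sum by (rule ext, rule sum.cong) (simp_all add: vv)
    have psiM: "\<forall>i<n. \<exists>M'. simpleR M' \<and> M' \<subseteq> A \<and> psi (v i) \<in> M'"
    proof (intro allI impI)
      fix i assume "i < n"
      then obtain M' where "simpleR M'" "M' \<subseteq> A" "v i \<in> phi ` M'" using v' by blast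
      then show "\<exists>M'. simpleR M' \<and> M' \<subseteq> A \<and> psi (v i) \<in> M'"
        by (intro exI[of _ M']) (simp add: img_psi)
    qed
    have "(\<Sum>i<n. psi (v i)) \<in> {(\<Sum>i<n. v i) | (n::nat) v. \<forall>i<n. \<exists>M. simpleR M \<and> M \<subseteq> A \<and> v i \<in> M}"
      using psiM by (intro CollectI exI[of _ n] exI[of _ "\<lambda>i. psi (v i)"]) simp
    then show "z \<in> phi ` {(\<Sum>i<n. v i) | (n::nat) v. \<forall>i<n. \<exists>M. simpleR M \<and> M \<subseteq> A \<and> v i \<in> M}"
      by (simp add: zeq)
  next
    fix z assume "z \<in> phi ` {(\<Sum>i<n. v i) | (n::nat) v. \<forall>i<n. \<exists>M. simpleR M \<and> M \<subseteq> A \<and> v i \<in> M}"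
    then obtain n :: nat and v where z: "z = phi (\<Sum>i<n. v i)" and v: "\<forall>i<n. \<exists>M. simpleR M \<and> M \<subseteq> A \<and> v i \<in> M"
      by blast
    have "z = (\<lambda>k. \<Sum>i<n. phi (v i) k)" by (simp add: z phi_sum)
    moreover have "\<forall>i<n. \<exists>M. simple_sub M \<and> M \<subseteq> phi ` A \<and> phi (v i) \<in> M"
    proof (intro allI impI)
      fix i assume "i < n"
      then obtain M where "simpleR M" "M \<subseteq> A" "v i \<in> M" using v by blast
      then show "\<exists>M. simple_sub M \<and> M \<subseteq> phi ` A \<and> phi (v i) \<in> M"
        by (intro exI[of _ "phi ` M"]) (simp add: simple_phi)
    qed
    ultimately show "z \<in> {(\<lambda>k. \<Sum>i<n. v i k) | (n::nat) v. \<forall>i<n. \<exists>M. simple_sub M \<and> M \<subseteq> phi ` A \<and> v i \<in> M}"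
      by (intro CollectI exI[of _ n] exI[of _ "\<lambda>i. phi (v i)"]) simp
  qed
  then show ?thesis unfolding semisimple_lmod_def ssR_def by (simp add: lsub_phi)
qed

lemma dsd_phi: "direct_sum_decomp (phi ` A) (phi ` U) (phi ` V) \<longleftrightarrow> dsdR A U V"
proof -
  have "{jadd a b | a b. a \<in> phi ` U \<and> b \<in> phi ` V} = phi ` {a + b | a b. a \<in> U \<and> b \<in> V}"
  proof (intro equalityI subsetI)
    fix z assume "z \<in> {jadd a b | a b. a \<in> phi ` U \<and> b \<in> phi ` V}"
    then obtain a b where "z = jadd (phi a) (phi b)" "a \<in> U" "b \<in> V" by blast
    then have "z = phi (a + b)" "a + b \<in> {a + b | a b. a \<in> U \<and> b \<in> V}" by (auto simp: phi_add)
    then show "z \<in> phi ` {a + b | a b. a \<in> U \<and> b \<in> V}" by blast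
  next
    fix z assume "z \<in> phi ` {a + b | a b. a \<in> U \<and> b \<in> V}"
    then obtain a b where "z = phi (a + b)" "a \<in> U" "b \<in> V" by blast
    then have "z = jadd (phi a) (phi b)" "phi a \<in> phi ` U" "phi b \<in> phi ` V" by (auto simp: phi_add)
    then show "z \<in> {jadd a b | a b. a \<in> phi ` U \<and> b \<in> phi ` V}" by blast
  qed
  then show ?thesis unfolding direct_sum_decomp_def dsdR_def lsub_phi phi_image_Int zero_phi phi_image_eq
    by simp
qed

lemma minp_phi: "min_x_poly (phi ` A) p \<longleftrightarrow> minpR A p"
  by (simp add: min_x_poly_def minpR_def eval_x_phi)

theorem corollary3:
  fixes H :: "'a::field jac set"
  assumes "left_ideal H"
  shows "(\<not> semisimple_lmod H \<longrightarrow>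
            (\<exists>!p. min_x_poly H p) \<and>
            (\<forall>p. min_x_poly H p \<longrightarrow>
               direct_sum_decomp H (KyL (H \<inter> kspan I0 \<inter> Ssum (degree p))) (Rprinc (eval_x p))))
       \<and> (semisimple_lmod H \<longrightarrow>
            direct_sum_decomp H (KyL (H \<inter> kspan I0)) (Rprinc (eval_x 0)) \<and>
            H = KyL (H \<inter> kspan I0))"
proof -
  define G where "G = {r. phi r \<in> H}"
  have HG: "H = phi ` G" using lsub_carrier[OF assms] by (simp add: G_def)
  have lG: "lid G" using assms by (simp add: HG lsub_phi)
  show ?thesis
    unfolding HG ss_phi minp_phi I0_phi kspan_phi Ssum_phi phi_image_Int KyL_phi eval_x_phi
      Rprinc_phi dsd_phi phi_image_eq
    by (rule mainR[OF lG])
qed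

end
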